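(* Let $\mathcal{C}$ be the full subcategory of $\mathrm{Aff}_{C^\infty}$ of connected objects that have a point, and let $T=\mathrm{Spec}(\mathbb{R}[\epsilon])$ where $\mathbb{R}[\epsilon]=\mathbb{R}[y]/(y^2)$. For any object $X$ of $\mathcal{C}$, the product $X\times T$ computed in $\mathrm{Aff}_{C^\infty}$ is also an object of $\mathcal{C}$.
   Context: A $C^\infty$-ring is a model of the algebraic theory whose $n$-ary operations are the smooth functions $\mathbb{R}^n\to\mathbb{R}$. $\mathrm{Aff}_{C^\infty}$ is the opposite of the category of finitely generated $C^\infty$-rings, and $\mathrm{Spec}\,A$ denotes $A$ regarded as an object there (products in $\mathrm{Aff}_{C^\infty}$ are coproducts of $C^\infty$-rings). An object $\mathrm{Spec}\,A$ is connected if $A$ has exactly two idempotents (equivalently, exactly two complemented subobjects in the extensive category $\mathrm{Aff}_{C^\infty}$), and has a point if there is a $C^\infty$-ring homomorphism $A\to\mathbb{R}$. $\mathbb{R}[\epsilon]$ is a Weil algebra with its canonical $C^\infty$-ring structure. *)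

theory Defs
  imports "HOL-Analysis.Analysis"
begin

text \<open>A point of R^n is represented as a function nat => real of which only the
coordinates 0..n-1 matter; an n-ary function is a function (nat => real) => real
that depends only on the first n coordinates.\<close>

definition depends_on_first :: "nat \<Rightarrow> ((nat \<Rightarrow> real) \<Rightarrow> 'b) \<Rightarrow> bool" where
  "depends_on_first n f \<longleftrightarrow> (\<forall>x y. (\<forall>i<n. x i = y i) \<longrightarrow> f x = f y)"

definition partial :: "nat \<Rightarrow> ((nat \<Rightarrow> real) \<Rightarrow> real) \<Rightarrow> ((nat \<Rightarrow> real) \<Rightarrow> real)" where
  "partial i f = (\<lambda>x. deriv (\<lambda>t. f (x(i := t))) (x i))"

fun iter_partial :: "nat list \<Rightarrow> ((nat \<Rightarrow> real) \<Rightarrow> real) \<Rightarrow> ((nat \<Rightarrow> real) \<Rightarrow> real)" where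
  "iter_partial [] f = f"
| "iter_partial (i # ds) f = partial i (iter_partial ds f)"

definition cont_n :: "nat \<Rightarrow> ((nat \<Rightarrow> real) \<Rightarrow> real) \<Rightarrow> bool" where
  "cont_n n h \<longleftrightarrow> (\<forall>x. \<forall>e>0. \<exists>d>0. \<forall>y. (\<forall>i<n. \<bar>y i - x i\<bar> < d) \<longrightarrow> \<bar>h y - h x\<bar> < e)"

definition smooth_fun :: "nat \<Rightarrow> ((nat \<Rightarrow> real) \<Rightarrow> real) \<Rightarrow> bool" where
  "smooth_fun n f \<longleftrightarrow> depends_on_first n f \<and>
     (\<forall>ds. set ds \<subseteq> {..<n} \<longrightarrow>
        cont_n n (iter_partial ds f) \<and>
        (\<forall>i<n. \<forall>x. (\<lambda>t. iter_partial ds f (x(i := t))) differentiable (at (x i))))"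

type_synonym 'a cinf_ops = "nat \<Rightarrow> ((nat \<Rightarrow> real) \<Rightarrow> real) \<Rightarrow> (nat \<Rightarrow> 'a) \<Rightarrow> 'a"

text \<open>Carrier A with, for each n and smooth f : R^n -> R, an operation A^n -> A
(n-tuples encoded as nat => 'a, only first n entries relevant).\<close>
definition cinf_ring :: "'a set \<Rightarrow> 'a cinf_ops \<Rightarrow> bool" where
  "cinf_ring A \<Phi> \<longleftrightarrow>
     (\<forall>n f a. smooth_fun n f \<longrightarrow> (\<forall>i<n. a i \<in> A) \<longrightarrow> \<Phi> n f a \<in> A) \<and>
     (\<forall>n f a b. smooth_fun n f \<longrightarrow> (\<forall>i<n. a i = b i) \<longrightarrow> \<Phi> n f a = \<Phi> n f b) \<and>
     (\<forall>n i a. i < n \<longrightarrow> (\<forall>j<n. a j \<in> A) \<longrightarrow> \<Phi> n (\<lambda>x. x i) a = a i) \<and>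
     (\<forall>n m f g a. smooth_fun m f \<longrightarrow> (\<forall>j<m. smooth_fun n (g j)) \<longrightarrow> (\<forall>i<n. a i \<in> A) \<longrightarrow>
        \<Phi> n (\<lambda>x. f (\<lambda>j. g j x)) a = \<Phi> m f (\<lambda>j. \<Phi> n (g j) a))"

definition cinf_hom :: "'a set \<Rightarrow> 'a cinf_ops \<Rightarrow> 'b set \<Rightarrow> 'b cinf_ops \<Rightarrow> ('a \<Rightarrow> 'b) \<Rightarrow> bool" where
  "cinf_hom A \<Phi> B \<Psi> h \<longleftrightarrow> (\<forall>x\<in>A. h x \<in> B) \<and>
     (\<forall>n f a. smooth_fun n f \<longrightarrow> (\<forall>i<n. a i \<in> A) \<longrightarrow> h (\<Phi> n f a) = \<Psi> n f (h \<circ> a))"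

definition cinf_closed :: "'a cinf_ops \<Rightarrow> 'a set \<Rightarrow> bool" where
  "cinf_closed \<Phi> S \<longleftrightarrow> (\<forall>n f a. smooth_fun n f \<longrightarrow> (\<forall>i<n. a i \<in> S) \<longrightarrow> \<Phi> n f a \<in> S)"

definition cinf_fg :: "'a set \<Rightarrow> 'a cinf_ops \<Rightarrow> bool" where
  "cinf_fg A \<Phi> \<longleftrightarrow> (\<exists>G. finite G \<and> G \<subseteq> A \<and>
       (\<forall>S. G \<subseteq> S \<longrightarrow> S \<subseteq> A \<longrightarrow> cinf_closed \<Phi> S \<longrightarrow> S = A))"

definition cinf_mul :: "'a cinf_ops \<Rightarrow> 'a \<Rightarrow> 'a \<Rightarrow> 'a" where
  "cinf_mul \<Phi> x y = \<Phi> 2 (\<lambda>v. v 0 * v 1) (\<lambda>i. if i = 0 then x else y)"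

definition cinf_idempotents :: "'a set \<Rightarrow> 'a cinf_ops \<Rightarrow> 'a set" where
  "cinf_idempotents A \<Phi> = {e \<in> A. cinf_mul \<Phi> e e = e}"

definition cinf_connected :: "'a set \<Rightarrow> 'a cinf_ops \<Rightarrow> bool" where
  "cinf_connected A \<Phi> \<longleftrightarrow> card (cinf_idempotents A \<Phi>) = 2"

definition real_cinf :: "real cinf_ops" where
  "real_cinf n f a = f a"

definition cinf_has_point :: "'a set \<Rightarrow> 'a cinf_ops \<Rightarrow> bool" where
  "cinf_has_point A \<Phi> \<longleftrightarrow> (\<exists>h. cinf_hom A \<Phi> (UNIV :: real set) real_cinf h)"

text \<open>The Weil algebra R[eps] = R[y]/(y^2), a + b eps encoded as (a,b), with its canonical
C^infinity structure f(a + b eps) = f(a) + (sum_i d_i f(a) b_i) eps.\<close>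
definition dual_cinf :: "(real \<times> real) cinf_ops" where
  "dual_cinf n f a = (f (fst \<circ> a), (\<Sum>i<n. partial i f (fst \<circ> a) * snd (a i)))"

text \<open>Coproduct in the category of finitely generated C^infinity-rings (= product in Aff).
Test objects range over finitely generated C^infinity-rings whose carrier lies in a fixed
type of cardinality at least the continuum; every finitely generated C^infinity-ring
(a quotient of C^infinity(R^n)) is isomorphic to one of these.\<close>
definition is_cinf_coproduct ::
  "'a set \<Rightarrow> 'a cinf_ops \<Rightarrow> 'b set \<Rightarrow> 'b cinf_ops \<Rightarrow> 'c set \<Rightarrow> 'c cinf_ops \<Rightarrow>
   ('a \<Rightarrow> 'c) \<Rightarrow> ('b \<Rightarrow> 'c) \<Rightarrow> bool" where
  "is_cinf_coproduct A \<Phi> B \<Psi> C \<Xi> i1 i2 \<longleftrightarrow>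
     cinf_ring C \<Xi> \<and> cinf_fg C \<Xi> \<and> cinf_hom A \<Phi> C \<Xi> i1 \<and> cinf_hom B \<Psi> C \<Xi> i2 \<and>
     (\<forall>(D :: ((nat \<Rightarrow> real) \<Rightarrow> real) set set) \<Delta> u v.
        cinf_ring D \<Delta> \<and> cinf_fg D \<Delta> \<and> cinf_hom A \<Phi> D \<Delta> u \<and> cinf_hom B \<Psi> D \<Delta> v \<longrightarrow>
        (\<exists>w. cinf_hom C \<Xi> D \<Delta> w \<and> (\<forall>x\<in>A. w (i1 x) = u x) \<and> (\<forall>x\<in>B. w (i2 x) = v x) \<and>
           (\<forall>w'. cinf_hom C \<Xi> D \<Delta> w' \<and> (\<forall>x\<in>A. w' (i1 x) = u x) \<and> (\<forall>x\<in>B. w' (i2 x) = v x)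
                 \<longrightarrow> (\<forall>y\<in>C. w' y = w y))))"

end

theory Submission
  imports Defs
begin

definition D_ok :: "nat \<Rightarrow> ((nat \<Rightarrow> real) \<Rightarrow> real) \<Rightarrow> bool" where
  "D_ok n g \<longleftrightarrow> depends_on_first n g \<and> cont_n n g \<and>
     (\<forall>i<n. \<forall>x. (\<lambda>t. g (x(i := t))) differentiable (at (x i)))"

lemma smooth_coinduct:
  assumes "K f" and step: "\<And>g. K g \<Longrightarrow> D_ok n g \<and> (\<forall>i<n. K (partial i g))"
  shows "smooth_fun n f"
proof -
  have "\<forall>ds. set ds \<subseteq> {..<n} \<longrightarrow> K (iter_partial ds f)"
  proof
    fix ds show "set ds \<subseteq> {..<n} \<longrightarrow> K (iter_partial ds f)"
      by (induction ds) (use assms in auto)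
  qed
  then show ?thesis using step[OF \<open>K f\<close>] step unfolding smooth_fun_def D_ok_def by blast
qed

lemma iter_partial_snoc: "iter_partial ds (partial i f) = iter_partial (ds @ [i]) f"
  by (induction ds) auto

lemma smooth_D: "smooth_fun n f \<Longrightarrow> D_ok n f"
  unfolding smooth_fun_def D_ok_def by (metis empty_set empty_subsetI iter_partial.simps(1))

lemma depends_partial:
  assumes "depends_on_first n f" "i < n"
  shows "depends_on_first n (partial i f)"
  unfolding depends_on_first_def partial_def
proof (intro allI impI)
  fix x y :: "nat \<Rightarrow> real" assume h: "\<forall>i<n. x i = y i"
  have "(\<lambda>t. f (x(i := t))) = (\<lambda>t. f (y(i := t)))"
    using assms(1) h unfolding depends_on_first_def by (intro ext) auto
  then show "deriv (\<lambda>t. f (x(i := t))) (x i) = deriv (\<lambda>t. f (y(i := t))) (y i)"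
    using h assms(2) by simp
qed

lemma smooth_partial:
  assumes "smooth_fun n f" "i < n"
  shows "smooth_fun n (partial i f)"
  using assms unfolding smooth_fun_def
  by (auto simp: iter_partial_snoc depends_partial)

lemma smooth_has_deriv:
  assumes "D_ok n f" "i < n"
  shows "((\<lambda>t. f (x(i := t))) has_real_derivative partial i f (x(i := t))) (at t)"
proof -
  have "(\<lambda>\<tau>. f ((x(i := t))(i := \<tau>))) differentiable (at ((x(i := t)) i))"
    using assms unfolding D_ok_def by blast
  then have "(\<lambda>\<tau>. f (x(i := \<tau>))) differentiable (at t)" by simp
  then have "((\<lambda>\<tau>. f (x(i := \<tau>))) has_real_derivative deriv (\<lambda>\<tau>. f (x(i := \<tau>))) t) (at t)"
    using DERIV_deriv_iff_real_differentiable by blast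
  then show ?thesis unfolding partial_def by simp
qed

lemma partial_eqI:
  assumes "\<And>t. ((\<lambda>\<tau>. g (x(i := \<tau>))) has_real_derivative Dv t) (at t)"
  shows "partial i g x = Dv (x i)"
  unfolding partial_def using DERIV_imp_deriv[OF assms[of "x i"]] by simp

lemma partial_eqI':
  assumes "\<And>x t. ((\<lambda>\<tau>. g (x(i := \<tau>))) has_real_derivative Dv (x(i := t))) (at t)"
  shows "partial i g = Dv"
proof
  fix x show "partial i g x = Dv x" using partial_eqI[of g x i "\<lambda>t. Dv (x(i:=t))", OF assms] by simp
qed

lemma partial_outside:
  assumes "depends_on_first n g" "n \<le> i"
  shows "partial i g = (\<lambda>_. 0)"
proof (rule partial_eqI')
  fix x :: "nat \<Rightarrow> real" and t
  have "(\<lambda>\<tau>. g (x(i := \<tau>))) = (\<lambda>_. g x)"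
    using assms unfolding depends_on_first_def by (intro ext) auto
  then show "((\<lambda>\<tau>. g (x(i := \<tau>))) has_real_derivative 0) (at t)" by simp
qed

lemma cont_n_tendsto:
  assumes "cont_n n \<phi>" "\<And>i. i < n \<Longrightarrow> ((\<lambda>y. G y i) \<longlongrightarrow> G0 i) F"
  shows "((\<lambda>y. \<phi> (G y)) \<longlongrightarrow> \<phi> G0) F"
proof (rule tendstoI)
  fix e :: real assume "e > 0"
  then obtain d where d: "d > 0" "\<And>y. (\<forall>i<n. \<bar>y i - G0 i\<bar> < d) \<Longrightarrow> \<bar>\<phi> y - \<phi> G0\<bar> < e"
    using assms(1) unfolding cont_n_def by blast
  have "\<forall>i\<in>{..<n}. \<forall>\<^sub>F y in F. \<bar>G y i - G0 i\<bar> < d"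
  proof
    fix i assume "i \<in> {..<n}"
    then have "\<forall>\<^sub>F y in F. dist (G y i) (G0 i) < d" using assms(2) d(1) tendstoD by blast
    then show "\<forall>\<^sub>F y in F. \<bar>G y i - G0 i\<bar> < d" by (simp add: dist_real_def)
  qed
  then have "\<forall>\<^sub>F y in F. \<forall>i\<in>{..<n}. \<bar>G y i - G0 i\<bar> < d"
    by (rule eventually_ball_finite[rotated]) simp
  then show "\<forall>\<^sub>F y in F. dist (\<phi> (G y)) (\<phi> G0) < e"
    by eventually_elim (use d in \<open>auto simp: dist_real_def\<close>)
qed

lemma cont_n_continuous_on:
  assumes "cont_n n \<phi>" "\<And>i. i < n \<Longrightarrow> continuous_on S (\<lambda>y. G y i)"
  shows "continuous_on S (\<lambda>y. \<phi> (G y))"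
  unfolding continuous_on_def
proof
  fix x assume "x \<in> S"
  show "((\<lambda>y. \<phi> (G y)) \<longlongrightarrow> \<phi> (G x)) (at x within S)"
    by (rule cont_n_tendsto[OF assms(1)]) (use assms(2) \<open>x \<in> S\<close> in \<open>auto simp: continuous_on_def\<close>)
qed

lemma cont_n_imp_continuous: "cont_n n \<phi> \<Longrightarrow> continuous_on UNIV \<phi>"
  using cont_n_continuous_on[of n \<phi> UNIV "\<lambda>y. y"] by simp

lemma continuous_imp_cont_n:
  assumes dep: "depends_on_first n h" and c: "continuous_on UNIV h"
  shows "cont_n n h"
  unfolding cont_n_def
proof (intro allI impI)
  fix x :: "nat \<Rightarrow> real" and e :: real assume "e > 0"
  then obtain r where r: "r > 0" "\<And>y. dist y x < r \<Longrightarrow> dist (h y) (h x) < e"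
    using c unfolding continuous_on_iff by (metis UNIV_I)
  define d where "d = r / 3"
  have "d > 0" using r by (simp add: d_def)
  moreover have "\<bar>h y - h x\<bar> < e" if hy: "\<forall>i<n. \<bar>y i - x i\<bar> < d" for y
  proof -
    define y' where "y' = (\<lambda>i. if i < n then y i else x i)"
    have "h y = h y'" using dep unfolding depends_on_first_def y'_def by auto
    have le: "(1/2)^k * min (dist (y' (from_nat k)) (x (from_nat k))) 1 \<le> (1/2)^k * d" for k
    proof -
      have "min (dist (y' (from_nat k)) (x (from_nat k))) 1 \<le> d"
        using hy \<open>d > 0\<close> by (auto simp: y'_def dist_real_def min_le_iff_disj)
      then show ?thesis by (intro mult_left_mono) auto
    qed
    have s1: "summable (\<lambda>k. (1/2::real)^k * d)"
      by (intro summable_mult2) (simp add: summable_geometric_iff)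
    have s2: "summable (\<lambda>k. (1/2::real)^k * min (dist (y' (from_nat k)) (x (from_nat k))) 1)"
      by (rule summable_comparison_test'[OF s1]) (use le in auto)
    have "dist y' x = (\<Sum>k. (1/2)^k * min (dist (y' (from_nat k)) (x (from_nat k))) 1)"
      unfolding dist_fun_def by simp
    also have "\<dots> \<le> (\<Sum>k. (1/2::real)^k * d)"
      by (rule suminf_le[OF le s2 s1])
    also have "\<dots> = 2 * d"
      using suminf_geometric[of "1/2::real"] suminf_mult2[of "\<lambda>k. (1/2::real)^k" d]
      by (simp add: summable_geometric_iff)
    finally have "dist y' x < r" using r \<open>d>0\<close> by (simp add: d_def)
    then show ?thesis using r(2) \<open>h y = h y'\<close> by (simp add: dist_real_def)
  qed
  ultimately show "\<exists>d>0. \<forall>y. (\<forall>i<n. \<bar>y i - x i\<bar> < d) \<longrightarrow> \<bar>h y - h x\<bar> < e" by blast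
qed

lemma cont_n_iff: "depends_on_first n h \<Longrightarrow> cont_n n h \<longleftrightarrow> continuous_on UNIV h"
  using cont_n_imp_continuous continuous_imp_cont_n by blast

lemma D_ok_add:
  assumes f: "D_ok n f" and g: "D_ok n g" shows "D_ok n (\<lambda>x. f x + g x)"
proof -
  have df: "depends_on_first n f" and dg: "depends_on_first n g"
    and cf: "continuous_on UNIV f" and cg: "continuous_on UNIV g"
    using f g cont_n_iff unfolding D_ok_def by blast+
  have dep: "depends_on_first n (\<lambda>x. f x + g x)" using df dg unfolding depends_on_first_def by metis
  have "cont_n n (\<lambda>x. f x + g x)" using cont_n_iff[OF dep] cf cg by (auto intro!: continuous_intros)
  then show ?thesis using dep f g unfolding D_ok_def by (auto intro: differentiable_add)
qed

lemma D_ok_mult: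
  assumes f: "D_ok n f" and g: "D_ok n g" shows "D_ok n (\<lambda>x. f x * g x)"
proof -
  have df: "depends_on_first n f" and dg: "depends_on_first n g"
    and cf: "continuous_on UNIV f" and cg: "continuous_on UNIV g"
    using f g cont_n_iff unfolding D_ok_def by blast+
  have dep: "depends_on_first n (\<lambda>x. f x * g x)" using df dg unfolding depends_on_first_def by metis
  have "cont_n n (\<lambda>x. f x * g x)" using cont_n_iff[OF dep] cf cg by (auto intro!: continuous_intros)
  then show ?thesis using dep f g unfolding D_ok_def by (auto intro: differentiable_mult)
qed

lemma D_ok_const: "D_ok n (\<lambda>_. c)"
  unfolding D_ok_def depends_on_first_def cont_n_def by auto

lemma partial_add: "D_ok n f \<Longrightarrow> D_ok n g \<Longrightarrow> i < n \<Longrightarrow>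
   partial i (\<lambda>x. f x + g x) = (\<lambda>x. partial i f x + partial i g x)"
  by (rule partial_eqI') (intro DERIV_add smooth_has_deriv)

lemma partial_mult: "D_ok n f \<Longrightarrow> D_ok n g \<Longrightarrow> i < n \<Longrightarrow>
   partial i (\<lambda>x. f x * g x) = (\<lambda>x. partial i f x * g x + f x * partial i g x)"
proof (rule partial_eqI')
  fix x :: "nat \<Rightarrow> real" and t assume a: "D_ok n f" "D_ok n g" "i < n"
  show "((\<lambda>\<tau>. f (x(i := \<tau>)) * g (x(i := \<tau>))) has_real_derivative
      partial i f (x(i := t)) * g (x(i := t)) + f (x(i := t)) * partial i g (x(i := t))) (at t)"
    using DERIV_mult[OF smooth_has_deriv[OF a(1) a(3)] smooth_has_deriv[OF a(2) a(3)]]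
    by (simp add: algebra_simps)
qed

lemma partial_const: "partial i (\<lambda>_. c) = (\<lambda>_. 0)"
  by (rule partial_eqI') simp

lemma smooth_const: "smooth_fun n (\<lambda>_. c)"
proof (rule smooth_coinduct[where K="\<lambda>g. \<exists>c. g = (\<lambda>_::nat\<Rightarrow>real. c::real)"])
  fix g :: "(nat \<Rightarrow> real) \<Rightarrow> real" assume "\<exists>c. g = (\<lambda>_. c)"
  then show "D_ok n g \<and> (\<forall>i<n. \<exists>c. partial i g = (\<lambda>_. c))"
    using D_ok_const partial_const by blast
qed auto

lemma partial_proj: "partial j (\<lambda>x. x i) = (\<lambda>_. if j = i then 1 else 0)"
proof (rule partial_eqI')
  fix x :: "nat \<Rightarrow> real" and t
  show "((\<lambda>\<tau>. (x(j := \<tau>)) i) has_real_derivative (if j = i then 1 else 0)) (at t)"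
    by (cases "j = i") auto
qed

lemma smooth_proj: "i < n \<Longrightarrow> smooth_fun n (\<lambda>x. x i)"
proof (rule smooth_coinduct[where K="\<lambda>g. g = (\<lambda>x::nat\<Rightarrow>real. x i) \<or> (\<exists>c. g = (\<lambda>_. c))"])
  fix g :: "(nat \<Rightarrow> real) \<Rightarrow> real" assume i: "i < n" and "g = (\<lambda>x. x i) \<or> (\<exists>c. g = (\<lambda>_. c))"
  moreover have "D_ok n (\<lambda>x. x i)"
    unfolding D_ok_def
  proof (intro conjI allI impI)
    show dep: "depends_on_first n (\<lambda>x. x i)" using i unfolding depends_on_first_def by metis
    show "cont_n n (\<lambda>x. x i)" using cont_n_iff[OF dep] by simp
    fix j x assume "j < n"
    show "(\<lambda>t. (x(j := t)) i) differentiable at (x j)"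
      by (cases "j = i") auto
  qed
  ultimately show "D_ok n g \<and> (\<forall>j<n. partial j g = (\<lambda>x. x i) \<or> (\<exists>c. partial j g = (\<lambda>_. c)))"
    using D_ok_const partial_const partial_proj by blast
qed auto

definition sop :: "(((nat \<Rightarrow> real) \<Rightarrow> real) \<times> ((nat \<Rightarrow> real) \<Rightarrow> real)) list \<Rightarrow> (nat \<Rightarrow> real) \<Rightarrow> real" where
  "sop L = (\<lambda>x. \<Sum>(a,b)\<leftarrow>L. a x * b x)"

lemma sop_simps: "sop [] = (\<lambda>_. 0)" "sop ((a,b)#L) = (\<lambda>x. a x * b x + sop L x)"
  "sop (L1 @ L2) = (\<lambda>x. sop L1 x + sop L2 x)"
  by (auto simp: sop_def)

lemma D_ok_sop: "\<forall>(a,b)\<in>set L. smooth_fun n a \<and> smooth_fun n b \<Longrightarrow> D_ok n (sop L)"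
proof (induction L)
  case Nil then show ?case by (simp add: sop_simps D_ok_const)
next
  case (Cons p L) then show ?case
    by (cases p) (simp add: sop_simps D_ok_add D_ok_mult smooth_D)
qed

lemma partial_sop: "\<forall>(a,b)\<in>set L. smooth_fun n a \<and> smooth_fun n b \<Longrightarrow> i < n \<Longrightarrow>
  partial i (sop L) = sop (concat (map (\<lambda>(a,b). [(partial i a, b), (a, partial i b)]) L))"
proof (induction L)
  case Nil then show ?case by (simp add: sop_simps partial_const)
next
  case (Cons p L)
  obtain a b where p: "p = (a,b)" by force
  have "partial i (sop (p#L)) = (\<lambda>x. partial i (\<lambda>x. a x * b x) x + partial i (sop L) x)"
    unfolding p sop_simps using Cons.prems p
    by (intro partial_add D_ok_mult D_ok_sop smooth_D) auto
  also have "\<dots> = (\<lambda>x. partial i a x * b x + a x * partial i b x + partial i (sop L) x)"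
    using Cons.prems p by (subst partial_mult) (auto intro: smooth_D)
  finally show ?case using Cons p by (auto simp: sop_simps algebra_simps)
qed

lemma smooth_sop: "\<forall>(a,b)\<in>set L. smooth_fun n a \<and> smooth_fun n b \<Longrightarrow> smooth_fun n (sop L)"
proof (rule smooth_coinduct[where K="\<lambda>g. \<exists>L. (\<forall>(a,b)\<in>set L. smooth_fun n a \<and> smooth_fun n b) \<and> g = sop L"])
  fix g assume "\<exists>L. (\<forall>(a,b)\<in>set L. smooth_fun n a \<and> smooth_fun n b) \<and> g = sop L"
  then obtain L where L: "\<forall>(a,b)\<in>set L. smooth_fun n a \<and> smooth_fun n b" "g = sop L" by blast
  have "\<forall>(a,b)\<in>set (concat (map (\<lambda>(a,b). [(partial i a, b), (a, partial i b)]) L)). smooth_fun n a \<and> smooth_fun n b"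
    if "i < n" for i using L(1) that by (auto intro: smooth_partial)
  then show "D_ok n g \<and> (\<forall>i<n. \<exists>L. (\<forall>(a,b)\<in>set L. smooth_fun n a \<and> smooth_fun n b) \<and> partial i g = sop L)"
    using L D_ok_sop partial_sop by blast
qed auto

lemma smooth_mult: "smooth_fun n f \<Longrightarrow> smooth_fun n g \<Longrightarrow> smooth_fun n (\<lambda>x. f x * g x)"
  using smooth_sop[of "[(f,g)]" n] by (simp add: sop_def)

lemma smooth_add: "smooth_fun n f \<Longrightarrow> smooth_fun n g \<Longrightarrow> smooth_fun n (\<lambda>x. f x + g x)"
  using smooth_sop[of "[(f,\<lambda>_. 1),(g,\<lambda>_. 1)]" n] by (simp add: sop_def smooth_const)

lemma smooth_diff: "smooth_fun n f \<Longrightarrow> smooth_fun n g \<Longrightarrow> smooth_fun n (\<lambda>x. f x - g x)"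
  using smooth_sop[of "[(f,\<lambda>_. 1),(g,\<lambda>_. -1)]" n] by (simp add: sop_def smooth_const)

lemma smooth_sum: "(\<And>k. k \<in> I \<Longrightarrow> smooth_fun n (f k)) \<Longrightarrow> smooth_fun n (\<lambda>x. \<Sum>k\<in>I. f k x)"
proof (induction I rule: infinite_finite_induct)
  case (infinite A) then show ?case by (simp add: smooth_const)
next
  case empty then show ?case by (simp add: smooth_const)
next
  case (insert x F) then show ?case by (simp add: smooth_add)
qed

lemma smooth_weaken:
  assumes "smooth_fun n f" "n \<le> m"
  shows "smooth_fun m f"
proof (rule smooth_coinduct[where K="smooth_fun n"])
  fix g assume g: "smooth_fun n g"
  then have Dg: "D_ok n g" by (rule smooth_D)
  have "D_ok m g"
    unfolding D_ok_def
  proof (intro conjI allI impI)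
    show dm: "depends_on_first m g" using Dg assms(2) unfolding D_ok_def depends_on_first_def by auto
    show "cont_n m g" using Dg dm cont_n_iff unfolding D_ok_def by blast
    fix i x assume "i < m"
    show "(\<lambda>t. g (x(i := t))) differentiable at (x i)"
    proof (cases "i < n")
      case True then show ?thesis using Dg unfolding D_ok_def by blast
    next
      case False
      then have "(\<lambda>t. g (x(i := t))) = (\<lambda>_. g x)"
        using Dg unfolding D_ok_def depends_on_first_def by (intro ext) auto
      then show ?thesis by simp
    qed
  qed
  moreover have "smooth_fun n (partial i g)" if "i < m" for i
  proof (cases "i < n")
    case True then show ?thesis using g smooth_partial by blast
  next
    case False then show ?thesis using partial_outside[of n g i] Dg smooth_const unfolding D_ok_def by auto
  qed
  ultimately show "D_ok m g \<and> (\<forall>i<m. smooth_fun n (partial i g))" by blast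
qed (rule assms)

definition Wv :: "nat \<Rightarrow> (nat \<Rightarrow> real \<Rightarrow> real) \<Rightarrow> (nat \<Rightarrow> real) \<Rightarrow> real \<Rightarrow> (nat \<Rightarrow> real)" where
  "Wv n c z s = (\<lambda>i. if i < n then z i + c i s * z (n + i) else 0)"

definition Iop :: "nat \<Rightarrow> (real \<Rightarrow> real) \<Rightarrow> (nat \<Rightarrow> real \<Rightarrow> real) \<Rightarrow> ((nat \<Rightarrow> real) \<Rightarrow> real) \<Rightarrow> (nat \<Rightarrow> real) \<Rightarrow> real" where
  "Iop n \<rho> c \<phi> = (\<lambda>z. integral {0..1} (\<lambda>s. \<rho> s * \<phi> (Wv n c z s)))"

lemma W_upd1: "k < n \<Longrightarrow> Wv n c (z(k := t)) s = (Wv n c z s)(k := t + c k s * z (n + k))"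
  by (auto simp: Wv_def fun_eq_iff)

lemma W_upd2: "j < n \<Longrightarrow> Wv n c (z(n + j := t)) s = (Wv n c z s)(j := z j + c j s * t)"
  by (auto simp: Wv_def fun_eq_iff)

lemma cont_W:
  assumes "\<And>i. continuous_on S (\<lambda>y. Z y i)" "continuous_on S Sv" "\<And>i. continuous_on UNIV (c i)"
  shows "continuous_on S (\<lambda>y. Wv n c (Z y) (Sv y) i)"
proof (cases "i < n")
  case True
  have "continuous_on S (\<lambda>y. c i (Sv y))"
    by (rule continuous_on_compose2[OF assms(3) assms(2)]) auto
  then show ?thesis using True assms(1) by (simp add: Wv_def) (intro continuous_intros)
qed (simp add: Wv_def)

lemma cont_integrand:
  assumes "cont_n n \<phi>" "\<And>i. continuous_on S (\<lambda>y. Z y i)" "continuous_on S Sv" "\<And>i. continuous_on UNIV (c i)"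
    "continuous_on UNIV \<rho>"
  shows "continuous_on S (\<lambda>y. \<rho> (Sv y) * \<phi> (Wv n c (Z y) (Sv y)))"
proof -
  have "continuous_on S (\<lambda>y. \<rho> (Sv y))"
    by (rule continuous_on_compose2[OF assms(5) assms(3)]) auto
  moreover have "continuous_on S (\<lambda>y. \<phi> (Wv n c (Z y) (Sv y)))"
    by (rule cont_n_continuous_on[OF assms(1)]) (rule cont_W[OF assms(2-4)])
  ultimately show ?thesis by (intro continuous_intros)
qed

lemma cont_upd: "continuous_on S (\<lambda>p. (z(k := fst p)) i)"
  by (cases "i = k") (auto intro!: continuous_intros)

lemma cont_fst_coord: "continuous_on S (\<lambda>x::(nat\<Rightarrow>real)\<times>'b::topological_space. fst x i)"
  using continuous_on_compose2[OF continuous_on_product_coordinates[of i] continuous_on_fst[OF continuous_on_id]]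
  by auto

lemma deriv_integrand1:
  assumes "D_ok n \<phi>" "k < n"
  shows "((\<lambda>t. \<rho> s * \<phi> (Wv n c (z(k := t)) s)) has_real_derivative
           \<rho> s * partial k \<phi> (Wv n c (z(k := t)) s)) (at t)"
proof -
  define v where "v = Wv n c z s"
  define a where "a = c k s * z (n + k)"
  have "((\<lambda>\<tau>. \<phi> (v(k := \<tau>))) has_real_derivative partial k \<phi> (v(k := t + a))) (at (t + a))"
    by (rule smooth_has_deriv[OF assms])
  then have "((\<lambda>t. \<phi> (v(k := t + a))) has_real_derivative partial k \<phi> (v(k := t + a))) (at t)"
    by (simp add: DERIV_shift)
  then show ?thesis using assms(2) unfolding W_upd1[OF assms(2)] v_def a_def
    by (intro DERIV_cmult) simp
qed

lemma deriv_integrand2: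
  assumes "D_ok n \<phi>" "j < n"
  shows "((\<lambda>t. \<rho> s * \<phi> (Wv n c (z(n + j := t)) s)) has_real_derivative
           (\<rho> s * c j s) * partial j \<phi> (Wv n c (z(n + j := t)) s)) (at t)"
proof -
  define v where "v = Wv n c z s"
  have "((\<lambda>\<tau>. \<phi> (v(j := \<tau>))) has_real_derivative partial j \<phi> (v(j := z j + c j s * t))) (at (z j + c j s * t))"
    by (rule smooth_has_deriv[OF assms])
  moreover have "((\<lambda>t. z j + c j s * t) has_real_derivative c j s) (at t)"
    by (auto intro!: derivative_eq_intros)
  ultimately have "((\<lambda>t. \<phi> (v(j := z j + c j s * t))) has_real_derivative partial j \<phi> (v(j := z j + c j s * t)) * c j s) (at t)"
    by (rule DERIV_chain2)
  then show ?thesis unfolding W_upd2[OF assms(2)] v_def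
    by (drule_tac DERIV_cmult[where c="\<rho> s"]) (simp add: algebra_simps)
qed

lemma Iop_deriv_gen:
  assumes phi: "smooth_fun n \<phi>" and rho: "continuous_on UNIV \<rho>" and c: "\<And>i. continuous_on UNIV (c i)"
    and dphi: "D_ok n \<psi>"
    and der: "\<And>t s. ((\<lambda>t. \<rho> s * \<phi> (Wv n c (z(k := t)) s)) has_real_derivative
           \<sigma> s * \<psi> (Wv n c (z(k := t)) s)) (at t)"
    and sig: "continuous_on UNIV \<sigma>"
  shows "((\<lambda>t. Iop n \<rho> c \<phi> (z(k := t))) has_real_derivative Iop n \<sigma> c \<psi> (z(k := t))) (at t)"
proof -
  have cphi: "cont_n n \<phi>" using smooth_D[OF phi] unfolding D_ok_def by blast
  have cpsi: "cont_n n \<psi>" using dphi unfolding D_ok_def by blast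
  have "((\<lambda>t. integral (cbox 0 1) (\<lambda>s. \<rho> s * \<phi> (Wv n c (z(k := t)) s))) has_field_derivative
        integral (cbox 0 1) (\<lambda>s. \<sigma> s * \<psi> (Wv n c (z(k := t)) s))) (at t within UNIV)"
  proof (rule leibniz_rule_field_derivative[where fx="\<lambda>t s. \<sigma> s * \<psi> (Wv n c (z(k := t)) s)"])
    show "\<And>x t. x \<in> UNIV \<Longrightarrow> t \<in> cbox 0 1 \<Longrightarrow>
      ((\<lambda>x. \<rho> t * \<phi> (Wv n c (z(k := x)) t)) has_field_derivative \<sigma> t * \<psi> (Wv n c (z(k := x)) t)) (at x within UNIV)"
      using der by simp
    fix x :: real
    have "continuous_on {0..1} (\<lambda>s. \<rho> (id s) * \<phi> (Wv n c ((\<lambda>_. z(k := x)) s) (id s)))"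
      by (rule cont_integrand[OF cphi _ _ c rho]) (auto intro!: continuous_intros)
    then show "(\<lambda>s. \<rho> s * \<phi> (Wv n c (z(k := x)) s)) integrable_on cbox 0 1"
      by (simp add: integrable_continuous_interval)
  next
    have "continuous_on (UNIV \<times> cbox 0 1) (\<lambda>p. \<sigma> (snd p) * \<psi> (Wv n c ((\<lambda>p. z(k := fst p)) p) (snd p)))"
      apply (rule cont_integrand[OF cpsi _ _ c sig])
      apply (rule cont_upd)
      by (auto intro!: continuous_intros)
    then show "continuous_on (UNIV \<times> cbox 0 1) (\<lambda>(x, t). \<sigma> t * \<psi> (Wv n c (z(k := x)) t))"
      by (simp add: case_prod_beta)
  qed auto
  then show ?thesis unfolding Iop_def by simp
qed

lemma Iop_continuous:
  assumes phi: "cont_n n \<phi>" and rho: "continuous_on UNIV \<rho>" and c: "\<And>i. continuous_on UNIV (c i)"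
  shows "continuous_on UNIV (Iop n \<rho> c \<phi>)"
  unfolding continuous_on_iff
proof (intro ballI allI impI)
  fix z0 :: "nat \<Rightarrow> real" and e :: real assume "e > 0"
  define fx where "fx = (\<lambda>p::(nat \<Rightarrow> real) \<times> real. \<rho> (snd p) * \<phi> (Wv n c (fst p) (snd p)))"
  have cfx: "continuous_on (UNIV \<times> cbox 0 1) fx"
    unfolding fx_def
    apply (rule cont_integrand[OF phi _ _ c rho])
    apply (rule cont_fst_coord)
    by (auto intro!: continuous_intros)
  obtain X0 where X0: "z0 \<in> X0" "open X0" "\<forall>x\<in>X0 \<inter> UNIV. \<forall>t\<in>cbox 0 1. dist (fx (x, t)) (fx (z0, t)) \<le> e/2"
    using continuous_on_prod_compactE[OF cfx, of z0 "e/2"] \<open>e > 0\<close> by auto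
  obtain r where r: "r > 0" "ball z0 r \<subseteq> X0" using X0 openE by blast
  have int: "(\<lambda>s. fx (z, s)) integrable_on cbox 0 1" for z
  proof -
    have "continuous_on (cbox 0 1) (\<lambda>s. fx (z, s))"
      using cont_integrand[OF phi _ _ c rho, where Z="\<lambda>_. z" and Sv=id and S="cbox 0 1"]
      unfolding fx_def by auto
    then show ?thesis by (rule integrable_continuous)
  qed
  have "dist (Iop n \<rho> c \<phi> z) (Iop n \<rho> c \<phi> z0) < e" if "dist z z0 < r" for z
  proof -
    have zX: "z \<in> X0" using that r by (auto simp: dist_commute)
    have "Iop n \<rho> c \<phi> z - Iop n \<rho> c \<phi> z0 = integral (cbox 0 1) (\<lambda>s. fx (z, s) - fx (z0, s))"
      unfolding Iop_def fx_def using int[of z] int[of z0] by (simp add: integral_diff fx_def)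
    moreover have "norm (integral (cbox 0 1) (\<lambda>s. fx (z, s) - fx (z0, s))) \<le> e/2 * Henstock_Kurzweil_Integration.content (cbox (0::real) 1)"
      by (rule has_integral_bound[where f="\<lambda>s. fx (z, s) - fx (z0, s)"])
         (use \<open>e>0\<close> X0(3) zX int in \<open>auto simp: dist_norm intro!: integrable_integral integrable_diff\<close>)
    ultimately show ?thesis using \<open>e > 0\<close> by (simp add: dist_real_def)
  qed
  then show "\<exists>d>0. \<forall>z\<in>UNIV. dist z z0 < d \<longrightarrow> dist (Iop n \<rho> c \<phi> z) (Iop n \<rho> c \<phi> z0) < e"
    using r by blast
qed

definition Kint :: "nat \<Rightarrow> ((nat \<Rightarrow> real) \<Rightarrow> real) \<Rightarrow> bool" where
  "Kint n g \<longleftrightarrow> (\<exists>\<rho> c \<phi>. smooth_fun n \<phi> \<and> continuous_on UNIV \<rho> \<and> (\<forall>i. continuous_on UNIV (c i))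
      \<and> g = Iop n \<rho> c \<phi>)"

lemma Iop_deriv1:
  assumes phi: "smooth_fun n \<phi>" and rho: "continuous_on UNIV \<rho>" and c: "\<And>i. continuous_on UNIV (c i)"
    and k: "k < n"
  shows "((\<lambda>t. Iop n \<rho> c \<phi> (z(k := t))) has_real_derivative Iop n \<rho> c (partial k \<phi>) (z(k := t))) (at t)"
  apply (rule Iop_deriv_gen[where \<sigma>=\<rho> and \<psi>="partial k \<phi>", OF phi rho c smooth_D[OF smooth_partial[OF phi k]]])
  apply (rule deriv_integrand1[OF smooth_D[OF phi] k])
  by (rule rho)

lemma Iop_deriv2:
  assumes phi: "smooth_fun n \<phi>" and rho: "continuous_on UNIV \<rho>" and c: "\<And>i. continuous_on UNIV (c i)"
    and j: "j < n"
  shows "((\<lambda>t. Iop n \<rho> c \<phi> (z(n + j := t))) has_real_derivative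
      Iop n (\<lambda>s. \<rho> s * c j s) c (partial j \<phi>) (z(n + j := t))) (at t)"
proof (rule Iop_deriv_gen[where \<sigma>="\<lambda>s. \<rho> s * c j s" and \<psi>="partial j \<phi>", OF phi rho c smooth_D[OF smooth_partial[OF phi j]]])
  show "((\<lambda>t. \<rho> s * \<phi> (Wv n c (z(n + j := t)) s)) has_real_derivative
           (\<rho> s * c j s) * partial j \<phi> (Wv n c (z(n + j := t)) s)) (at t)" for t s
    by (rule deriv_integrand2[OF smooth_D[OF phi] j])
  show "continuous_on UNIV (\<lambda>s. \<rho> s * c j s)" using rho c by (intro continuous_intros)
qed

lemma smooth_Iop:
  assumes "smooth_fun n \<phi>" "continuous_on UNIV \<rho>" "\<And>i. continuous_on UNIV (c i)"
  shows "smooth_fun (2 * n) (Iop n \<rho> c \<phi>)"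
proof (rule smooth_coinduct[where K="Kint n"])
  show "Kint n (Iop n \<rho> c \<phi>)" using assms unfolding Kint_def by blast
next
  fix g assume "Kint n g"
  then obtain \<rho> c \<phi> where phi: "smooth_fun n \<phi>" and rho: "continuous_on UNIV \<rho>"
    and c: "\<And>i. continuous_on UNIV (c i)" and g: "g = Iop n \<rho> c \<phi>"
    unfolding Kint_def by blast
  have dep: "depends_on_first (2 * n) g"
  proof -
    have "Wv n c x s = Wv n c y s" if "\<forall>i<2 * n. x i = y i" for x y s
      using that by (auto simp: Wv_def fun_eq_iff)
    then show ?thesis unfolding depends_on_first_def g Iop_def
      by (intro allI impI arg_cong[where f="integral {0..1}"] ext) (metis (no_types))
  qed
  have cont: "cont_n (2 * n) g"
  proof -
    have "cont_n n \<phi>" using smooth_D[OF phi] unfolding D_ok_def by blast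
    then have "continuous_on UNIV g" unfolding g by (rule Iop_continuous[OF _ rho c])
    then show ?thesis using cont_n_iff[OF dep] by blast
  qed
  have der: "\<exists>\<rho>' \<phi>'. smooth_fun n \<phi>' \<and> continuous_on UNIV \<rho>' \<and>
      (\<forall>x t. ((\<lambda>\<tau>. g (x(k := \<tau>))) has_real_derivative Iop n \<rho>' c \<phi>' (x(k := t))) (at t))"
    if "k < 2 * n" for k
  proof (cases "k < n")
    case True show ?thesis
    proof (intro exI conjI allI)
      show "smooth_fun n (partial k \<phi>)" by (rule smooth_partial[OF phi True])
      show "continuous_on UNIV \<rho>" by (rule rho)
      fix x t show "((\<lambda>\<tau>. g (x(k:=\<tau>))) has_real_derivative Iop n \<rho> c (partial k \<phi>) (x(k:=t))) (at t)"
        unfolding g by (rule Iop_deriv1[where c=c, OF phi rho c True])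
    qed
  next
    case False
    define j where "j = k - n"
    have j: "k = n + j" "j < n" using that False unfolding j_def by auto
    show ?thesis
    proof (intro exI conjI allI)
      show "smooth_fun n (partial j \<phi>)" by (rule smooth_partial[OF phi j(2)])
      show "continuous_on UNIV (\<lambda>s. \<rho> s * c j s)" using rho c by (intro continuous_intros)
      fix x t show "((\<lambda>\<tau>. g (x(k:=\<tau>))) has_real_derivative Iop n (\<lambda>s. \<rho> s * c j s) c (partial j \<phi>) (x(k:=t))) (at t)"
        unfolding g j(1) by (rule Iop_deriv2[where c=c, OF phi rho c j(2)])
    qed
  qed
  have "D_ok (2 * n) g"
    unfolding D_ok_def
  proof (intro conjI dep cont allI impI)
    fix k x assume "k < 2 * n"
    then obtain \<rho>' \<phi>' where "\<forall>x t. ((\<lambda>\<tau>. g (x(k := \<tau>))) has_real_derivative Iop n \<rho>' c \<phi>' (x(k := t))) (at t)"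
      using der by blast
    then show "(\<lambda>t. g (x(k := t))) differentiable at (x k)"
      using real_differentiable_def by blast
  qed
  moreover have "Kint n (partial k g)" if kk: "k < 2 * n" for k
  proof -
    obtain \<rho>' \<phi>' where "smooth_fun n \<phi>'" "continuous_on UNIV \<rho>'"
      "\<forall>x t. ((\<lambda>\<tau>. g (x(k := \<tau>))) has_real_derivative Iop n \<rho>' c \<phi>' (x(k := t))) (at t)"
      using der[OF kk] by blast
    moreover from this(3) have "partial k g = Iop n \<rho>' c \<phi>'" by (intro partial_eqI') blast
    ultimately show ?thesis unfolding Kint_def using c by blast
  qed
  ultimately show "D_ok (2 * n) g \<and> (\<forall>i<2 * n. Kint n (partial i g))" by blast
qed

definition cH :: "nat \<Rightarrow> nat \<Rightarrow> real \<Rightarrow> real" where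
  "cH j i s = (if i < j then 1 else if i = j then s else 0)"

definition hadj :: "nat \<Rightarrow> ((nat \<Rightarrow> real) \<Rightarrow> real) \<Rightarrow> nat \<Rightarrow> (nat \<Rightarrow> real) \<Rightarrow> real" where
  "hadj n f j = Iop n (\<lambda>_. 1) (cH j) (partial j f)"

lemma smooth_hadj: "smooth_fun n f \<Longrightarrow> j < n \<Longrightarrow> smooth_fun (2 * n) (hadj n f j)"
  unfolding hadj_def
proof (rule smooth_Iop)
  fix i show "continuous_on UNIV (cH j i)"
    unfolding cH_def by (cases "i < j"; cases "i = j") (auto intro!: continuous_intros)
qed (auto intro!: smooth_partial continuous_intros)

lemma hadamard:
  assumes f: "smooth_fun n f"
  shows "f (\<lambda>i. z i + z (n + i)) = f z + (\<Sum>j<n. z (n + j) * hadj n f j z)"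
proof -
  define v where "v j = (\<lambda>i. if i < n then z i + (if i < j then z (n + i) else 0) else 0)" for j
  have Df: "D_ok n f" by (rule smooth_D[OF f])
  then have dep: "depends_on_first n f" unfolding D_ok_def by blast
  have v0: "f (v 0) = f z" using dep unfolding depends_on_first_def v_def by auto
  have vn: "f (v n) = f (\<lambda>i. z i + z (n + i))" using dep unfolding depends_on_first_def v_def by auto
  have step: "f (v (Suc j)) - f (v j) = z (n + j) * hadj n f j z" if j: "j < n" for j
  proof -
    define b where "b = z (n + j)"
    define G where "G s = f ((v j)(j := z j + s * b))" for s
    have W: "Wv n (cH j) z s = (v j)(j := z j + s * b)" for s
      using j by (auto simp: Wv_def cH_def v_def b_def fun_eq_iff)
    have der: "(G has_real_derivative partial j f ((v j)(j := z j + s * b)) * b) (at s)" for s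
    proof -
      have "((\<lambda>\<tau>. f ((v j)(j := \<tau>))) has_real_derivative partial j f ((v j)(j := z j + s * b))) (at (z j + s * b))"
        by (rule smooth_has_deriv[OF Df j])
      moreover have "((\<lambda>s. z j + s * b) has_real_derivative b) (at s)"
        by (auto intro!: derivative_eq_intros)
      ultimately show ?thesis unfolding G_def by (rule DERIV_chain2)
    qed
    have "((\<lambda>s. partial j f ((v j)(j := z j + s * b)) * b) has_integral G 1 - G 0) {0..1}"
      by (rule fundamental_theorem_of_calculus)
         (auto intro!: has_real_derivative_iff_has_vector_derivative[THEN iffD1] DERIV_subset[OF der])
    then have "integral {0..1} (\<lambda>s. partial j f ((v j)(j := z j + s * b)) * b) = G 1 - G 0"
      by (rule integral_unique)
    moreover have "integral {0..1} (\<lambda>s. partial j f ((v j)(j := z j + s * b)) * b)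
        = b * hadj n f j z"
      unfolding hadj_def Iop_def W using integral_mult_right[of "{0..1::real}" b]
      by (simp add: mult.commute)
    moreover have "G 1 = f (v (Suc j))"
      unfolding G_def by (rule arg_cong[where f=f]) (auto simp: v_def b_def fun_eq_iff j)
    moreover have "G 0 = f (v j)"
      unfolding G_def by (rule arg_cong[where f=f]) (auto simp: v_def fun_eq_iff j)
    ultimately show ?thesis by (simp add: b_def)
  qed
  have "f (v n) - f (v 0) = (\<Sum>j<n. f (v (Suc j)) - f (v j))"
    by (rule sum_lessThan_telescope[symmetric])
  also have "\<dots> = (\<Sum>j<n. z (n + j) * hadj n f j z)"
    by (rule sum.cong) (auto simp: step)
  finally show ?thesis using v0 vn by simp
qed

type_synonym rf = "(nat \<Rightarrow> real) \<Rightarrow> real"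

datatype tm = Gen nat | Op rf "tm list"

fun evt :: "'x cinf_ops \<Rightarrow> (nat \<Rightarrow> 'x) \<Rightarrow> tm \<Rightarrow> 'x" where
  "evt \<Psi> gs (Gen k) = gs k"
| "evt \<Psi> gs (Op f ts) = \<Psi> (length ts) f (\<lambda>i. map (evt \<Psi> gs) ts ! i)"

fun wft :: "nat \<Rightarrow> tm \<Rightarrow> bool" where
  "wft m (Gen k) = (k < m)"
| "wft m (Op f ts) = (smooth_fun (length ts) f \<and> list_all (wft m) ts)"

lemma cr_closed0: "cinf_ring X \<Psi> \<Longrightarrow> \<forall>n f a. smooth_fun n f \<longrightarrow> (\<forall>i<n. a i \<in> X) \<longrightarrow> \<Psi> n f a \<in> X"
  unfolding cinf_ring_def by (elim conjE)
lemma cr_cong0: "cinf_ring X \<Psi> \<Longrightarrow> \<forall>n f a b. smooth_fun n f \<longrightarrow> (\<forall>i<n. a i = b i) \<longrightarrow> \<Psi> n f a = \<Psi> n f b"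
  unfolding cinf_ring_def by (elim conjE)
lemma cr_proj0: "cinf_ring X \<Psi> \<Longrightarrow> \<forall>n i a. i < n \<longrightarrow> (\<forall>j<n. a j \<in> X) \<longrightarrow> \<Psi> n (\<lambda>x. x i) a = a i"
  unfolding cinf_ring_def by (elim conjE)
lemma cr_comp0: "cinf_ring X \<Psi> \<Longrightarrow> \<forall>n m f g a. smooth_fun m f \<longrightarrow> (\<forall>j<m. smooth_fun n (g j)) \<longrightarrow> (\<forall>i<n. a i \<in> X) \<longrightarrow>
        \<Psi> n (\<lambda>x. f (\<lambda>j. g j x)) a = \<Psi> m f (\<lambda>j. \<Psi> n (g j) a)"
  unfolding cinf_ring_def by (elim conjE)

lemma cr_closed: "cinf_ring X \<Psi> \<Longrightarrow> smooth_fun n f \<Longrightarrow> (\<And>i. i < n \<Longrightarrow> a i \<in> X) \<Longrightarrow> \<Psi> n f a \<in> X"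
  using cr_closed0[rule_format, of X \<Psi> n f a, rotated] by blast

lemma cr_cong: "cinf_ring X \<Psi> \<Longrightarrow> smooth_fun n f \<Longrightarrow> (\<And>i. i < n \<Longrightarrow> a i = b i) \<Longrightarrow> \<Psi> n f a = \<Psi> n f b"
  using cr_cong0[rule_format, of X \<Psi> n f a b] by blast

lemma cr_proj: "cinf_ring X \<Psi> \<Longrightarrow> i < n \<Longrightarrow> (\<And>j. j < n \<Longrightarrow> a j \<in> X) \<Longrightarrow> \<Psi> n (\<lambda>x. x i) a = a i"
  using cr_proj0[rule_format, of X \<Psi> i n a] by blast

lemma cr_comp: "cinf_ring X \<Psi> \<Longrightarrow> smooth_fun m f \<Longrightarrow> (\<And>j. j < m \<Longrightarrow> smooth_fun n (g j)) \<Longrightarrow>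
    (\<And>i. i < n \<Longrightarrow> a i \<in> X) \<Longrightarrow> \<Psi> n (\<lambda>x. f (\<lambda>j. g j x)) a = \<Psi> m f (\<lambda>j. \<Psi> n (g j) a)"
  using cr_comp0[rule_format, of X \<Psi> m f n g a] by blast

lemma evt_in:
  assumes X: "cinf_ring X \<Psi>" and gs: "\<And>k. k < m \<Longrightarrow> gs k \<in> X"
  shows "wft m t \<Longrightarrow> evt \<Psi> gs t \<in> X"
proof (induction t)
  case (Gen k) then show ?case using gs by simp
next
  case (Op f ts)
  then have "\<forall>i<length ts. map (evt \<Psi> gs) ts ! i \<in> X"
    by (auto simp: list_all_iff)
  then show ?case using Op.prems by (auto intro!: cr_closed[OF X])
qed

lemma fg_span:
  assumes X: "cinf_ring X \<Psi>" and fg: "cinf_fg X \<Psi>"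
  obtains m gs where "\<And>k. k < m \<Longrightarrow> gs k \<in> X" "\<And>x. x \<in> X \<Longrightarrow> \<exists>t. wft m t \<and> evt \<Psi> gs t = x"
proof -
  obtain G where G: "finite G" "G \<subseteq> X" "\<And>S. G \<subseteq> S \<Longrightarrow> S \<subseteq> X \<Longrightarrow> cinf_closed \<Psi> S \<Longrightarrow> S = X"
    using fg unfolding cinf_fg_def by blast
  obtain L where L: "set L = G" using finite_list[OF G(1)] by blast
  define gs where "gs = (\<lambda>k. L ! k)"
  define m where "m = length L"
  have gsX: "gs k \<in> X" if "k < m" for k using that G(2) L unfolding gs_def m_def by auto
  define E where "E = {evt \<Psi> gs t | t. wft m t}"
  have "E \<subseteq> X" unfolding E_def using evt_in[where m=m and gs=gs, OF X gsX] by blast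
  moreover have "G \<subseteq> E"
  proof
    fix x assume "x \<in> G"
    then obtain k where "k < length L" "L ! k = x" using L by (auto simp: in_set_conv_nth)
    then have "k < m" "x = gs k" unfolding gs_def m_def by auto
    then show "x \<in> E" unfolding E_def by (intro CollectI exI[of _ "Gen k"]) simp
  qed
  moreover have "cinf_closed \<Psi> E"
    unfolding cinf_closed_def
  proof (intro allI impI)
    fix n f a assume f: "smooth_fun n f" and a: "\<forall>i<n. a i \<in> E"
    have ex: "\<exists>t. wft m t \<and> evt \<Psi> gs t = a i" if "i < n" for i
    proof -
      have "a i \<in> E" using a that by blast
      then show ?thesis unfolding E_def by auto
    qed
    define tt where "tt i = (SOME t. wft m t \<and> evt \<Psi> gs t = a i)" for i
    have tt: "wft m (tt i) \<and> evt \<Psi> gs (tt i) = a i" if "i < n" for i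
      unfolding tt_def by (rule someI_ex[OF ex[OF that]])
    define ts where "ts = map tt [0..<n]"
    have "wft m (Op f ts)" using f tt by (simp add: ts_def list_all_iff)
    moreover have "evt \<Psi> gs (Op f ts) = \<Psi> n f a"
    proof -
      have "evt \<Psi> gs (Op f ts) = \<Psi> n f (\<lambda>i. map (evt \<Psi> gs) ts ! i)" by (simp add: ts_def)
      also have "\<dots> = \<Psi> n f a"
        using tt by (intro cr_cong[OF X f]) (simp add: ts_def)
      finally show ?thesis .
    qed
    ultimately show "\<Psi> n f a \<in> E" unfolding E_def by (intro CollectI exI[of _ "Op f ts"]) simp
  qed
  ultimately have "E = X" using G(3) by blast
  show ?thesis
  proof (rule that)
    show "gs k \<in> X" if "k < m" for k using gsX[OF that] .
    fix x assume "x \<in> X"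
    then have "x \<in> E" using \<open>E = X\<close> by simp
    then show "\<exists>t. wft m t \<and> evt \<Psi> gs t = x" unfolding E_def by auto
  qed
qed

fun nodes :: "tm \<Rightarrow> (nat list \<times> nat \<times> rf) set" where
  "nodes (Gen k) = {([], 0, \<lambda>_. real k)}"
| "nodes (Op f ts) = insert ([], Suc (length ts), f)
     (\<Union> (set (map (\<lambda>(i, S). (\<lambda>(p, l). (i # p, l)) ` S) (List.enumerate 0 (map nodes ts)))))"

lemma aux: "x \<in> (\<Union> (set (map (\<lambda>(i, S). (\<lambda>(p, l). (i # p, l)) ` S) (List.enumerate 0 Ss))))
   \<longleftrightarrow> (\<exists>i<length Ss. x \<in> (\<lambda>(p, l). (i # p, l)) ` (Ss ! i))"
proof -
  have "x \<in> (\<Union> (set (map (\<lambda>(i, S). (\<lambda>(p, l). (i # p, l)) ` S) (List.enumerate 0 Ss))))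
     \<longleftrightarrow> (\<exists>y \<in> set (List.enumerate 0 Ss). x \<in> (\<lambda>(p, l). (fst y # p, l)) ` (snd y))"
    by (simp add: case_prod_beta)
  also have "\<dots> \<longleftrightarrow> (\<exists>i<length Ss. x \<in> (\<lambda>(p, l). (i # p, l)) ` (Ss ! i))"
    by (simp add: in_set_enumerate_eq Bex_def)
  finally show ?thesis .
qed

lemma img_cons: "(q, l) \<in> (\<lambda>(p, l). (i # p, l)) ` S \<longleftrightarrow> (\<exists>p. q = i # p \<and> (p, l) \<in> S)"
  by force

lemma nodes_Op_mem: "(q, l) \<in> nodes (Op f ts) \<longleftrightarrow>
   (q = [] \<and> l = (Suc (length ts), f)) \<or> (\<exists>i p. q = i # p \<and> i < length ts \<and> (p, l) \<in> nodes (ts ! i))"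
  unfolding nodes.simps(2) insert_iff aux img_cons by auto

lemma nodes_root: "{l. ([], l) \<in> nodes t} = (case t of Gen k \<Rightarrow> {(0, \<lambda>_. real k)} | Op f ts \<Rightarrow> {(Suc (length ts), f)})"
proof (cases t)
  case (Gen k) then show ?thesis by simp
next
  case (Op f ts) then show ?thesis by (auto simp only: nodes_Op_mem) auto
qed

lemma nodes_child:
  assumes "i < length ts" shows "{(p, l). (i # p, l) \<in> nodes (Op f ts)} = nodes (ts ! i)"
proof (rule set_eqI)
  fix x :: "nat list \<times> nat \<times> rf"
  obtain p l where x: "x = (p, l)" by (cases x) auto
  show "x \<in> {(p, l). (i # p, l) \<in> nodes (Op f ts)} \<longleftrightarrow> x \<in> nodes (ts ! i)"
    unfolding x mem_Collect_eq case_prod_conv nodes_Op_mem using assms by simp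
qed

lemma nodes_inj: "nodes t1 = nodes t2 \<Longrightarrow> t1 = t2"
proof (induction t1 arbitrary: t2)
  case (Gen k)
  then have "{l. ([], l) \<in> nodes (Gen k)} = {l. ([], l) \<in> nodes t2}" by simp
  then show ?case unfolding nodes_root
    by (cases t2) (auto simp: fun_eq_iff)
next
  case (Op f ts)
  have "{l. ([], l) \<in> nodes (Op f ts)} = {l. ([], l) \<in> nodes t2}" using Op.prems by simp
  then obtain ts2 where t2: "t2 = Op f ts2" "length ts2 = length ts"
    unfolding nodes_root by (cases t2) auto
  have "ts ! i = ts2 ! i" if "i < length ts" for i
  proof -
    have e: "nodes (Op f ts) = nodes (Op f ts2)" using Op.prems t2 by simp
    have "{(p, l). (i # p, l) \<in> nodes (Op f ts)} = {(p, l). (i # p, l) \<in> nodes (Op f ts2)}"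
      by (simp only: e)
    then have "nodes (ts ! i) = nodes (ts2 ! i)"
      using that t2(2) by (simp only: nodes_child)
    then show ?thesis using Op.IH that by simp
  qed
  then show ?case using t2 by (simp add: list_eq_iff_nth_eq)
qed

definition enc_node :: "nat list \<times> nat \<times> rf \<Rightarrow> rf" where
  "enc_node q = (\<lambda>x. if x 0 = real (to_nat (fst q, fst (snd q))) then snd (snd q) (\<lambda>i. x (Suc i))
                     else real (to_nat (fst q, fst (snd q))))"

lemma enc_node_inj: "inj enc_node"
proof (rule injI)
  fix q1 q2 assume eq: "enc_node q1 = enc_node q2"
  obtain p1 k1 f1 where q1: "q1 = (p1, k1, f1)" by (cases q1) auto
  obtain p2 k2 f2 where q2: "q2 = (p2, k2, f2)" by (cases q2) auto
  have "enc_node q1 (\<lambda>_. -1) = enc_node q2 (\<lambda>_. -1)" using eq by simp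
  then have "real (to_nat (p1, k1)) = real (to_nat (p2, k2))"
    unfolding enc_node_def q1 q2 by simp
  then have pk: "(p1, k1) = (p2, k2)" by simp
  have "f1 y = f2 y" for y
  proof -
    define x where "x = (\<lambda>i. case i of 0 \<Rightarrow> real (to_nat (p1, k1)) | Suc j \<Rightarrow> y j)"
    have "enc_node q1 x = enc_node q2 x" using eq by simp
    then show ?thesis using pk unfolding enc_node_def q1 q2 x_def by simp
  qed
  then show "q1 = q2" using pk q1 q2 by auto
qed

definition enc_tm :: "tm \<Rightarrow> rf set" where
  "enc_tm t = enc_node ` nodes t"

lemma enc_tm_inj: "inj enc_tm"
  by (rule injI) (auto simp: enc_tm_def inj_image_eq_iff[OF enc_node_inj] intro: nodes_inj)

lemma exists_encoding:
  assumes "cinf_ring X \<Psi>" "cinf_fg X \<Psi>"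
  shows "\<exists>enc :: 'x \<Rightarrow> rf set. inj_on enc X"
proof -
  obtain m gs where span: "\<And>x. x \<in> X \<Longrightarrow> \<exists>t. wft m t \<and> evt \<Psi> gs t = x"
    using fg_span[OF assms] by blast
  define ch where "ch x = (SOME t. wft m t \<and> evt \<Psi> gs t = x)" for x
  have ch: "evt \<Psi> gs (ch x) = x" if "x \<in> X" for x
    unfolding ch_def using someI_ex[OF span[OF that]] by blast
  have "inj_on (enc_tm \<circ> ch) X"
  proof (rule inj_onI)
    fix x y assume xy: "x \<in> X" "y \<in> X" "(enc_tm \<circ> ch) x = (enc_tm \<circ> ch) y"
    then have "ch x = ch y" using injD[OF enc_tm_inj] by simp
    then have "evt \<Psi> gs (ch x) = evt \<Psi> gs (ch y)" by (rule arg_cong)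
    then show "x = y" using ch[OF xy(1)] ch[OF xy(2)] by simp
  qed
  then show ?thesis by blast
qed

lemma hom_in: "cinf_hom A \<Phi> B \<Psi> h \<Longrightarrow> x \<in> A \<Longrightarrow> h x \<in> B"
  unfolding cinf_hom_def by blast

lemma hom_op: "cinf_hom A \<Phi> B \<Psi> h \<Longrightarrow> smooth_fun n f \<Longrightarrow> (\<And>i. i < n \<Longrightarrow> a i \<in> A) \<Longrightarrow>
   h (\<Phi> n f a) = \<Psi> n f (h \<circ> a)"
  unfolding cinf_hom_def by blast

lemma hom_comp:
  assumes "cinf_hom A \<Phi> B \<Psi> h" "cinf_hom B \<Psi> C \<Xi> k"
  shows "cinf_hom A \<Phi> C \<Xi> (k \<circ> h)"
  unfolding cinf_hom_def
proof (intro conjI ballI allI impI)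
  fix x assume "x \<in> A" then show "(k \<circ> h) x \<in> C" using assms by (auto intro: hom_in)
next
  fix n f a assume f: "smooth_fun n f" and a: "\<forall>i<n. a i \<in> A"
  have "k (h (\<Phi> n f a)) = k (\<Psi> n f (h \<circ> a))" using hom_op[OF assms(1) f] a by simp
  also have "\<dots> = \<Xi> n f (k \<circ> (h \<circ> a))" using hom_op[OF assms(2) f] a hom_in[OF assms(1)] by simp
  finally show "(k \<circ> h) (\<Phi> n f a) = \<Xi> n f ((k \<circ> h) \<circ> a)" by (simp add: o_assoc)
qed

definition tOps :: "'x set \<Rightarrow> 'x cinf_ops \<Rightarrow> ('x \<Rightarrow> 'y) \<Rightarrow> 'y cinf_ops" where
  "tOps X \<Psi> enc = (\<lambda>n f a. enc (\<Psi> n f (\<lambda>i. inv_into X enc (a i))))"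

lemma transport:
  fixes enc :: "'x \<Rightarrow> 'y" and X :: "'x set"
  assumes X: "cinf_ring X \<Psi>" and fg: "cinf_fg X \<Psi>" and inj: "inj_on enc X"
  shows "cinf_ring (enc ` X) (tOps X \<Psi> enc)" "cinf_fg (enc ` X) (tOps X \<Psi> enc)"
    "cinf_hom X \<Psi> (enc ` X) (tOps X \<Psi> enc) enc"
    "cinf_hom (enc ` X) (tOps X \<Psi> enc) X \<Psi> (inv_into X enc)"
proof -
  define dec where "dec = inv_into X enc"
  define D where "D = enc ` X"
  define \<Delta> where "\<Delta> = tOps X \<Psi> enc"
  have de: "x \<in> X \<Longrightarrow> dec (enc x) = x" for x using inj unfolding dec_def by simp
  have dX: "y \<in> D \<Longrightarrow> dec y \<in> X" for y unfolding dec_def D_def by (simp add: inv_into_into)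
  have ed: "y \<in> D \<Longrightarrow> enc (dec y) = y" for y unfolding dec_def D_def by (simp add: f_inv_into_f)
  have \<Delta>: "\<Delta> n f a = enc (\<Psi> n f (\<lambda>i. dec (a i)))" for n f a unfolding \<Delta>_def tOps_def dec_def by simp
  have encop: "enc (\<Psi> n f a) = \<Delta> n f (enc \<circ> a)" if f: "smooth_fun n f" and a: "\<And>i. i < n \<Longrightarrow> a i \<in> X" for n f a
  proof -
    have "\<Psi> n f a = \<Psi> n f (\<lambda>i. dec ((enc \<circ> a) i))" by (rule cr_cong[OF X f]) (simp add: de a)
    then show ?thesis unfolding \<Delta> by simp
  qed
  show ring: "cinf_ring (enc ` X) (tOps X \<Psi> enc)"
    unfolding cinf_ring_def D_def[symmetric] \<Delta>_def[symmetric]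
  proof (intro conjI allI impI)
    fix n f and a :: "nat \<Rightarrow> 'y" assume f: "smooth_fun n f" and a: "\<forall>i<n. a i \<in> D"
    show "\<Delta> n f a \<in> D" unfolding \<Delta> D_def by (intro imageI cr_closed[OF X f]) (simp add: a dX)
  next
    fix n f and a b :: "nat \<Rightarrow> 'y" assume f: "smooth_fun n f" and ab: "\<forall>i<n. a i = b i"
    show "\<Delta> n f a = \<Delta> n f b" unfolding \<Delta> using ab by (intro arg_cong[where f=enc] cr_cong[OF X f]) simp
  next
    fix n i and a :: "nat \<Rightarrow> 'y" assume i: "i < n" and a: "\<forall>j<n. a j \<in> D"
    have "\<Psi> n (\<lambda>x. x i) (\<lambda>i. dec (a i)) = dec (a i)" by (rule cr_proj[OF X i]) (simp add: a dX)
    then show "\<Delta> n (\<lambda>x. x i) a = a i" unfolding \<Delta> using ed a i by simp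
  next
    fix n m f g and a :: "nat \<Rightarrow> 'y" assume f: "smooth_fun m f" and g: "\<forall>j<m. smooth_fun n (g j)" and a: "\<forall>i<n. a i \<in> D"
    have "\<Psi> n (\<lambda>x. f (\<lambda>j. g j x)) (\<lambda>i. dec (a i)) = \<Psi> m f (\<lambda>j. \<Psi> n (g j) (\<lambda>i. dec (a i)))"
      by (rule cr_comp[OF X f]) (simp_all add: g a dX)
    also have "\<dots> = \<Psi> m f (\<lambda>j. dec (\<Delta> n (g j) a))"
      by (rule cr_cong[OF X f]) (simp add: \<Delta> de cr_closed[OF X] g a dX)
    finally show "\<Delta> n (\<lambda>x. f (\<lambda>j. g j x)) a = \<Delta> m f (\<lambda>j. \<Delta> n (g j) a)"
      unfolding \<Delta>[of n] \<Delta>[of m] by simp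
  qed
  show "cinf_fg (enc ` X) (tOps X \<Psi> enc)"
    unfolding cinf_fg_def D_def[symmetric] \<Delta>_def[symmetric]
  proof -
    obtain G where G: "finite G" "G \<subseteq> X" "\<And>S. G \<subseteq> S \<Longrightarrow> S \<subseteq> X \<Longrightarrow> cinf_closed \<Psi> S \<Longrightarrow> S = X"
      using fg unfolding cinf_fg_def by blast
    have "\<forall>S. enc ` G \<subseteq> S \<longrightarrow> S \<subseteq> D \<longrightarrow> cinf_closed \<Delta> S \<longrightarrow> S = D"
    proof (intro allI impI)
      fix S assume S: "enc ` G \<subseteq> S" "S \<subseteq> D" "cinf_closed \<Delta> S"
      define T where "T = {x \<in> X. enc x \<in> S}"
      have "cinf_closed \<Psi> T"
        unfolding cinf_closed_def
      proof (intro allI impI)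
        fix n f a assume f: "smooth_fun n f" and a: "\<forall>i<n. a i \<in> T"
        have "\<Delta> n f (enc \<circ> a) \<in> S" using S(3) f a unfolding cinf_closed_def T_def by auto
        then show "\<Psi> n f a \<in> T" unfolding T_def using encop[OF f] a cr_closed[OF X f] T_def by auto
      qed
      then have "T = X" using G S(1) by (intro G(3)) (auto simp: T_def)
      then show "S = D" using S(2) unfolding D_def T_def by auto
    qed
    then show "\<exists>G'. finite G' \<and> G' \<subseteq> D \<and> (\<forall>S. G' \<subseteq> S \<longrightarrow> S \<subseteq> D \<longrightarrow> cinf_closed \<Delta> S \<longrightarrow> S = D)"
      using G unfolding D_def by (intro exI[of _ "enc ` G"]) auto
  qed
  show "cinf_hom X \<Psi> (enc ` X) (tOps X \<Psi> enc) enc"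
    unfolding cinf_hom_def D_def[symmetric] \<Delta>_def[symmetric]
    using encop unfolding D_def by auto
  show "cinf_hom (enc ` X) (tOps X \<Psi> enc) X \<Psi> (inv_into X enc)"
    unfolding cinf_hom_def D_def[symmetric] \<Delta>_def[symmetric] dec_def[symmetric]
  proof (intro conjI ballI allI impI)
    fix y assume "y \<in> D" then show "dec y \<in> X" by (rule dX)
  next
    fix n f a assume f: "smooth_fun n f" and a: "\<forall>i<n. a i \<in> D"
    show "dec (\<Delta> n f a) = \<Psi> n f (dec \<circ> a)" unfolding \<Delta>
      by (subst de) (auto intro!: cr_closed[OF X f] simp: a dX o_def)
  qed
qed

lemma smooth_depends: "smooth_fun n f \<Longrightarrow> depends_on_first n f"
  unfolding smooth_fun_def by blast

lemma cst_ev: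
  assumes X: "cinf_ring X \<Psi>" and a: "\<And>i. i < k \<Longrightarrow> a i \<in> X"
  shows "\<Psi> k (\<lambda>_. r) a = \<Psi> 0 (\<lambda>_. r) b"
proof -
  have "\<Psi> k (\<lambda>x. (\<lambda>_. r) (\<lambda>j. (\<lambda>_::nat. \<lambda>_::nat\<Rightarrow>real. 0::real) j x)) a
      = \<Psi> 0 (\<lambda>_. r) (\<lambda>j. \<Psi> k ((\<lambda>_ _. 0) j) a)"
    by (rule cr_comp[OF X smooth_const]) (auto intro: a)
  also have "\<dots> = \<Psi> 0 (\<lambda>_. r) b" by (rule cr_cong[OF X smooth_const]) auto
  finally show ?thesis by simp
qed

lemma comp_list:
  assumes X: "cinf_ring X \<Psi>" and V: "smooth_fun (length Gs) V" and Gs: "\<And>G. G \<in> set Gs \<Longrightarrow> smooth_fun k G"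
    and a: "\<And>i. i < k \<Longrightarrow> a i \<in> X"
  shows "\<Psi> k (\<lambda>x. V (\<lambda>m. map (\<lambda>G. G x) Gs ! m)) a = \<Psi> (length Gs) V (\<lambda>m. map (\<lambda>G. \<Psi> k G a) Gs ! m)"
proof -
  have dV: "depends_on_first (length Gs) V" by (rule smooth_depends[OF V])
  have "(\<lambda>x. V (\<lambda>m. map (\<lambda>G. G x) Gs ! m)) = (\<lambda>x. V (\<lambda>j. (Gs ! j) x))"
    using dV unfolding depends_on_first_def by (intro ext) (metis (no_types, lifting) nth_map)
  then have "\<Psi> k (\<lambda>x. V (\<lambda>m. map (\<lambda>G. G x) Gs ! m)) a = \<Psi> k (\<lambda>x. V (\<lambda>j. (Gs ! j) x)) a" by simp
  also have "\<dots> = \<Psi> (length Gs) V (\<lambda>j. \<Psi> k (Gs ! j) a)"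
    by (rule cr_comp[OF X V]) (auto intro: Gs a)
  also have "\<dots> = \<Psi> (length Gs) V (\<lambda>m. map (\<lambda>G. \<Psi> k G a) Gs ! m)"
    by (rule cr_cong[OF X V]) simp
  finally show ?thesis .
qed

lemma smooth_V3: "smooth_fun 3 (\<lambda>v. v 0 + v 1 * v 2)"
  by (intro smooth_add smooth_mult smooth_proj) auto

lemma smooth_V2: "smooth_fun 2 (\<lambda>v. v 0 * v 1)"
  by (intro smooth_mult smooth_proj) auto

lemma smooth_A2: "smooth_fun 2 (\<lambda>v. v 0 + v 1)"
  by (intro smooth_add smooth_proj) auto

locale cop_setup =
  fixes A :: "'a set" and \<Phi> :: "'a cinf_ops" and P :: "'p set" and \<Theta> :: "'p cinf_ops"
    and i1 :: "'a \<Rightarrow> 'p" and i2 :: "real \<times> real \<Rightarrow> 'p"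
  assumes ringA: "cinf_ring A \<Phi>" and fgA: "cinf_fg A \<Phi>"
    and cop: "is_cinf_coproduct A \<Phi> (UNIV :: (real \<times> real) set) dual_cinf P \<Theta> i1 i2"
begin

lemma ringP: "cinf_ring P \<Theta>" and fgP: "cinf_fg P \<Theta>" and hom1: "cinf_hom A \<Phi> P \<Theta> i1"
  and hom2: "cinf_hom UNIV dual_cinf P \<Theta> i2"
  using cop unfolding is_cinf_coproduct_def by blast+

lemma univ:
  fixes D :: "rf set set"
  assumes "cinf_ring D \<Delta>" "cinf_fg D \<Delta>" "cinf_hom A \<Phi> D \<Delta> u" "cinf_hom UNIV dual_cinf D \<Delta> v"
  shows "\<exists>w. cinf_hom P \<Theta> D \<Delta> w \<and> (\<forall>x\<in>A. w (i1 x) = u x) \<and> (\<forall>x. w (i2 x) = v x) \<and>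
           (\<forall>w'. cinf_hom P \<Theta> D \<Delta> w' \<and> (\<forall>x\<in>A. w' (i1 x) = u x) \<and> (\<forall>x. w' (i2 x) = v x)
                 \<longrightarrow> (\<forall>y\<in>P. w' y = w y))"
proof -
  have "\<forall>(D :: rf set set) \<Delta> u v.
        cinf_ring D \<Delta> \<and> cinf_fg D \<Delta> \<and> cinf_hom A \<Phi> D \<Delta> u \<and> cinf_hom UNIV dual_cinf D \<Delta> v \<longrightarrow>
        (\<exists>w. cinf_hom P \<Theta> D \<Delta> w \<and> (\<forall>x\<in>A. w (i1 x) = u x) \<and> (\<forall>x\<in>UNIV. w (i2 x) = v x) \<and>
           (\<forall>w'. cinf_hom P \<Theta> D \<Delta> w' \<and> (\<forall>x\<in>A. w' (i1 x) = u x) \<and> (\<forall>x\<in>UNIV. w' (i2 x) = v x)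
                 \<longrightarrow> (\<forall>y\<in>P. w' y = w y)))"
    using cop unfolding is_cinf_coproduct_def by (elim conjE)
  then show ?thesis using assms by simp
qed

lemma closedD: "cinf_closed \<Psi> S \<Longrightarrow> smooth_fun n f \<Longrightarrow> (\<And>i. i < n \<Longrightarrow> a i \<in> S) \<Longrightarrow> \<Psi> n f a \<in> S"
  unfolding cinf_closed_def by blast

definition cA :: "real \<Rightarrow> 'a" where "cA r = \<Phi> 0 (\<lambda>_. r) (\<lambda>_. undefined)"

lemma cA_in: "cA r \<in> A"
  unfolding cA_def by (rule cr_closed[OF ringA smooth_const]) auto

lemma cA_hom: "cinf_hom UNIV dual_cinf A \<Phi> (cA \<circ> fst)"
  unfolding cinf_hom_def
proof (intro conjI ballI allI impI)
  fix x show "(cA \<circ> fst) x \<in> A" using cA_in by simp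
next
  fix n f and a :: "nat \<Rightarrow> real \<times> real" assume f: "smooth_fun n f" and "\<forall>i<n. a i \<in> UNIV"
  have "\<Phi> n f ((cA \<circ> fst) \<circ> a) = \<Phi> n f (\<lambda>j. \<Phi> 0 (\<lambda>_. fst (a j)) (\<lambda>_. undefined))"
    by (simp add: cA_def o_def)
  also have "\<dots> = \<Phi> 0 (\<lambda>x. f (\<lambda>j. fst (a j))) (\<lambda>_. undefined)"
    by (rule cr_comp[OF ringA f, symmetric]) (auto intro: smooth_const)
  finally show "(cA \<circ> fst) (dual_cinf n f a) = \<Phi> n f ((cA \<circ> fst) \<circ> a)"
    by (simp add: cA_def dual_cinf_def o_def)
qed

lemma exists_q:
  obtains q where "cinf_hom P \<Theta> A \<Phi> q" "\<And>x. x \<in> A \<Longrightarrow> q (i1 x) = x" "\<And>r. q (i2 r) = cA (fst r)"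
proof -
  obtain enc :: "'a \<Rightarrow> rf set" where inj: "inj_on enc A" using exists_encoding[OF ringA fgA] by blast
  note T = transport[OF ringA fgA inj]
  have vh: "cinf_hom UNIV dual_cinf (enc ` A) (tOps A \<Phi> enc) (enc \<circ> (cA \<circ> fst))"
    by (rule hom_comp[OF cA_hom T(3)])
  obtain w where w: "cinf_hom P \<Theta> (enc ` A) (tOps A \<Phi> enc) w" "\<forall>x\<in>A. w (i1 x) = enc x"
    "\<forall>x. w (i2 x) = (enc \<circ> (cA \<circ> fst)) x"
    using univ[OF T(1) T(2) T(3) vh] by blast
  show ?thesis
  proof (rule that)
    show "cinf_hom P \<Theta> A \<Phi> (inv_into A enc \<circ> w)" by (rule hom_comp[OF w(1) T(4)])
    show "(inv_into A enc \<circ> w) (i1 x) = x" if "x \<in> A" for x using w(2) that inj by simp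
    show "(inv_into A enc \<circ> w) (i2 r) = cA (fst r)" for r
    proof -
      have "w (i2 r) = enc (cA (fst r))" using w(3) by (cases r) simp
      then show ?thesis using inj cA_in by simp
    qed
  qed
qed

definition eps :: 'p where "eps = i2 (0, 1)"

lemma partial_affine: "partial 0 (\<lambda>v. r + s * v 0) = (\<lambda>_. s)"
proof (rule partial_eqI')
  fix x :: "nat \<Rightarrow> real" and t
  show "((\<lambda>\<tau>. r + s * (x(0 := \<tau>)) 0) has_real_derivative s) (at t)"
    by (auto intro!: derivative_eq_intros)
qed

lemma i2_eps: "i2 (r, s) = \<Theta> 1 (\<lambda>v. r + s * v 0) (\<lambda>_. eps)"
proof -
  have sm: "smooth_fun 1 (\<lambda>v. r + s * v 0)"
    by (intro smooth_add smooth_mult smooth_const smooth_proj) auto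
  have "dual_cinf 1 (\<lambda>v. r + s * v 0) (\<lambda>_. (0, 1)) = (r, s)"
    by (simp add: dual_cinf_def partial_affine o_def)
  then have "i2 (r, s) = i2 (dual_cinf 1 (\<lambda>v. r + s * v 0) (\<lambda>_. (0, 1)))" by simp
  also have "\<dots> = \<Theta> 1 (\<lambda>v. r + s * v 0) (i2 \<circ> (\<lambda>_. (0, 1)))"
    by (rule hom_op[OF hom2 sm]) auto
  finally show ?thesis by (simp add: eps_def o_def)
qed

lemma generation:
  assumes T: "cinf_closed \<Theta> T" "T \<subseteq> P" "i1 ` A \<subseteq> T" "range i2 \<subseteq> T"
  shows "T = P"
proof -
  define S where "S = \<Inter> {T. cinf_closed \<Theta> T \<and> T \<subseteq> P \<and> i1 ` A \<subseteq> T \<and> range i2 \<subseteq> T}"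
  have P_in: "cinf_closed \<Theta> P \<and> P \<subseteq> P \<and> i1 ` A \<subseteq> P \<and> range i2 \<subseteq> P"
    using cr_closed[OF ringP] hom_in[OF hom1] hom_in[OF hom2] unfolding cinf_closed_def by auto
  have SP: "S \<subseteq> P" using P_in unfolding S_def by blast
  have Sgen: "i1 ` A \<subseteq> S" "range i2 \<subseteq> S" unfolding S_def by blast+
  have Scl: "cinf_closed \<Theta> S" unfolding S_def cinf_closed_def by blast
  have ST: "S \<subseteq> T" using T unfolding S_def by blast
  have ringS: "cinf_ring S \<Theta>"
    unfolding cinf_ring_def
  proof (intro conjI allI impI)
    fix n :: nat and f and a :: "nat \<Rightarrow> 'p" assume "smooth_fun n f" "\<forall>i<n. a i \<in> S"
    then show "\<Theta> n f a \<in> S" using Scl unfolding cinf_closed_def by blast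
  next
    fix n :: nat and f and a b :: "nat \<Rightarrow> 'p" assume "smooth_fun n f" "\<forall>i<n. a i = b i"
    then show "\<Theta> n f a = \<Theta> n f b" using cr_cong[OF ringP] by blast
  next
    fix n i :: nat and a :: "nat \<Rightarrow> 'p" assume "i < n" "\<forall>j<n. a j \<in> S"
    then show "\<Theta> n (\<lambda>x. x i) a = a i" using cr_proj[OF ringP] SP by blast
  next
    fix n m :: nat and f g and a :: "nat \<Rightarrow> 'p" assume "smooth_fun m f" "\<forall>j<m. smooth_fun n (g j)" "\<forall>i<n. a i \<in> S"
    then show "\<Theta> n (\<lambda>x. f (\<lambda>j. g j x)) a = \<Theta> m f (\<lambda>j. \<Theta> n (g j) a)"
      using cr_comp[OF ringP] SP by blast
  qed
  have fgS: "cinf_fg S \<Theta>"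
    unfolding cinf_fg_def
  proof -
    obtain G where G: "finite G" "G \<subseteq> A" "\<And>S. G \<subseteq> S \<Longrightarrow> S \<subseteq> A \<Longrightarrow> cinf_closed \<Phi> S \<Longrightarrow> S = A"
      using fgA unfolding cinf_fg_def by blast
    have "T' = S" if T': "insert eps (i1 ` G) \<subseteq> T'" "T' \<subseteq> S" "cinf_closed \<Theta> T'" for T'
    proof -
      define U where "U = {a \<in> A. i1 a \<in> T'}"
      have "cinf_closed \<Phi> U"
        unfolding cinf_closed_def
      proof (intro allI impI)
        fix n f a assume f: "smooth_fun n f" and a: "\<forall>i<n. a i \<in> U"
        have "i1 (\<Phi> n f a) = \<Theta> n f (i1 \<circ> a)" by (rule hom_op[OF hom1 f]) (use a U_def in auto)
        moreover have "\<Theta> n f (i1 \<circ> a) \<in> T'" using T'(3) f a unfolding cinf_closed_def U_def by auto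
        ultimately show "\<Phi> n f a \<in> U" unfolding U_def using cr_closed[OF ringA f] a U_def by auto
      qed
      then have "U = A" using G T'(1) by (intro G(3)) (auto simp: U_def)
      then have "i1 ` A \<subseteq> T'" unfolding U_def by auto
      moreover have "range i2 \<subseteq> T'"
      proof
        fix y assume "y \<in> range i2"
        then obtain r s where y: "y = i2 (r, s)" by auto
        have sm: "smooth_fun 1 (\<lambda>v. r + s * v 0)"
          by (intro smooth_add smooth_mult smooth_const smooth_proj) auto
        have "\<Theta> 1 (\<lambda>v. r + s * v 0) (\<lambda>_. eps) \<in> T'"
          by (rule closedD[OF T'(3) sm]) (use T'(1) in auto)
        then show "y \<in> T'" using y i2_eps by simp
      qed
      ultimately have "S \<subseteq> T'" unfolding S_def using T'(2,3) SP by blast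
      then show ?thesis using T'(2) by blast
    qed
    moreover have "insert eps (i1 ` G) \<subseteq> S" using Sgen G(2) unfolding eps_def by blast
    ultimately show "\<exists>G'. finite G' \<and> G' \<subseteq> S \<and> (\<forall>T'. G' \<subseteq> T' \<longrightarrow> T' \<subseteq> S \<longrightarrow> cinf_closed \<Theta> T' \<longrightarrow> T' = S)"
      using G(1) by (intro exI[of _ "insert eps (i1 ` G)"]) auto
  qed
  obtain encS :: "'p \<Rightarrow> rf set" where injS: "inj_on encS S" using exists_encoding[OF ringS fgS] by blast
  obtain encP :: "'p \<Rightarrow> rf set" where injP: "inj_on encP P" using exists_encoding[OF ringP fgP] by blast
  note TS = transport[OF ringS fgS injS]
  note TP = transport[OF ringP fgP injP]
  have h1S: "cinf_hom A \<Phi> S \<Theta> i1" using hom1 Sgen unfolding cinf_hom_def by auto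
  have h2S: "cinf_hom UNIV dual_cinf S \<Theta> i2" using hom2 Sgen unfolding cinf_hom_def by auto
  have inclS: "cinf_hom S \<Theta> P \<Theta> id" using SP unfolding cinf_hom_def by auto
  obtain w where w: "cinf_hom P \<Theta> (encS ` S) (tOps S \<Theta> encS) w" "\<forall>x\<in>A. w (i1 x) = (encS \<circ> i1) x"
    "\<forall>x. w (i2 x) = (encS \<circ> i2) x"
    using univ[OF TS(1) TS(2) hom_comp[OF h1S TS(3)] hom_comp[OF h2S TS(3)]] by blast
  define w1 where "w1 = encP \<circ> (id \<circ> (inv_into S encS \<circ> w))"
  have w1h: "cinf_hom P \<Theta> (encP ` P) (tOps P \<Theta> encP) w1"
    unfolding w1_def by (intro hom_comp[OF _ TP(3)] hom_comp[OF _ inclS] hom_comp[OF w(1) TS(4)])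
  have w1a: "\<forall>x\<in>A. w1 (i1 x) = (encP \<circ> i1) x" using w(2) injS Sgen unfolding w1_def by auto
  have w1b: "\<forall>x. w1 (i2 x) = (encP \<circ> i2) x"
  proof
    fix x
    have "i2 x \<in> S" using Sgen by blast
    moreover have "w (i2 x) = encS (i2 x)" using spec[OF w(3), of x] by (simp only: o_apply)
    ultimately show "w1 (i2 x) = (encP \<circ> i2) x" using injS unfolding w1_def by simp
  qed
  obtain w0 where w0: "\<forall>w'. cinf_hom P \<Theta> (encP ` P) (tOps P \<Theta> encP) w' \<and> (\<forall>x\<in>A. w' (i1 x) = (encP \<circ> i1) x)
      \<and> (\<forall>x. w' (i2 x) = (encP \<circ> i2) x) \<longrightarrow> (\<forall>y\<in>P. w' y = w0 y)"
    using univ[OF TP(1) TP(2) hom_comp[OF hom1 TP(3)] hom_comp[OF hom2 TP(3)]] by blast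
  have "\<forall>y\<in>P. w1 y = w0 y" using w0 w1h w1a w1b by blast
  moreover have "\<forall>y\<in>P. encP y = w0 y" using w0 TP(3) by auto
  ultimately have eq: "encP (inv_into S encS (w y)) = encP y" if "y \<in> P" for y
    using that unfolding w1_def by auto
  have "P \<subseteq> S"
  proof
    fix y assume y: "y \<in> P"
    have "inv_into S encS (w y) \<in> S" using hom_in[OF hom_comp[OF w(1) TS(4)] y] by simp
    then have "inv_into S encS (w y) = y" using inj_onD[OF injP eq[OF y]] SP y by blast
    then show "y \<in> S" using \<open>inv_into S encS (w y) \<in> S\<close> by simp
  qed
  then show ?thesis using ST T(2) by blast
qed

end

definition V3 :: "(nat \<Rightarrow> real) \<Rightarrow> real" where "V3 = (\<lambda>v. v 0 + v 1 * v 2)"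

lemma smooth_V3': "smooth_fun 3 V3" unfolding V3_def by (rule smooth_V3)

lemma nth3_in: "a \<in> S \<Longrightarrow> b \<in> S \<Longrightarrow> c \<in> S \<Longrightarrow> i < 3 \<Longrightarrow> [a, b, c] ! i \<in> S"
proof -
  assume "a \<in> S" "b \<in> S" "c \<in> S" "i < 3"
  moreover have "i = 0 \<or> i = 1 \<or> i = 2" using \<open>i < 3\<close> by arith
  ultimately show ?thesis by auto
qed

lemma rep_comp:
  assumes X: "cinf_ring X \<Psi>" and F: "smooth_fun k F0" "smooth_fun k F1" "smooth_fun k F2"
    and b: "\<And>i. i < k \<Longrightarrow> b i \<in> X"
  shows "\<Psi> k (\<lambda>x. F0 x + F1 x * F2 x) b = \<Psi> 3 V3 (\<lambda>m. [\<Psi> k F0 b, \<Psi> k F1 b, \<Psi> k F2 b] ! m)"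
proof -
  have "\<Psi> k (\<lambda>x. V3 (\<lambda>m. map (\<lambda>G. G x) [F0, F1, F2] ! m)) b
      = \<Psi> (length [F0, F1, F2]) V3 (\<lambda>m. map (\<lambda>G. \<Psi> k G b) [F0, F1, F2] ! m)"
    by (rule comp_list[OF X]) (use smooth_V3' F b in \<open>auto simp: numeral_3_eq_3\<close>)
  moreover have "(\<lambda>x. V3 (\<lambda>m. map (\<lambda>G. G x) [F0, F1, F2] ! m)) = (\<lambda>x. F0 x + F1 x * F2 x)"
    by (simp add: V3_def)
  moreover have "length [F0, F1, F2] = 3" by simp
  ultimately show ?thesis by (simp only: list.map)
qed

context cop_setup
begin

definition rep :: "'a \<Rightarrow> 'p \<Rightarrow> 'p" where
  "rep \<alpha> g = \<Theta> 3 V3 (\<lambda>m. [i1 \<alpha>, eps, g] ! m)"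

definition Sset :: "'p set" where
  "Sset = {e. \<exists>\<alpha>\<in>A. \<exists>g\<in>P. e = rep \<alpha> g}"

lemma eps_in: "eps \<in> P" unfolding eps_def using hom_in[OF hom2] by simp

lemma i1_in: "x \<in> A \<Longrightarrow> i1 x \<in> P" using hom_in[OF hom1] .

lemma Sset_sub: "Sset \<subseteq> P"
proof
  fix e assume "e \<in> Sset"
  then obtain \<alpha> g where "\<alpha> \<in> A" "g \<in> P" "e = rep \<alpha> g" unfolding Sset_def by blast
  moreover have "rep \<alpha> g \<in> P" unfolding rep_def
    by (rule cr_closed[OF ringP smooth_V3'], rule nth3_in) (use \<open>\<alpha> \<in> A\<close> \<open>g \<in> P\<close> in \<open>auto simp: eps_in i1_in\<close>)
  ultimately show "e \<in> P" by simp
qed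

lemma Sset_closed: "cinf_closed \<Theta> Sset"
  unfolding cinf_closed_def
proof (intro allI impI)
  fix n f and p :: "nat \<Rightarrow> 'p"
  assume f: "smooth_fun n f" and p: "\<forall>i<n. p i \<in> Sset"
  have ex: "\<exists>ag. fst ag \<in> A \<and> snd ag \<in> P \<and> p i = rep (fst ag) (snd ag)" if "i < n" for i
  proof -
    have "p i \<in> Sset" using p that by blast
    then obtain \<alpha> g where "\<alpha> \<in> A" "g \<in> P" "p i = rep \<alpha> g" unfolding Sset_def by blast
    then show ?thesis by (intro exI[of _ "(\<alpha>, g)"]) simp
  qed
  define ag where "ag i = (SOME ag. fst ag \<in> A \<and> snd ag \<in> P \<and> p i = rep (fst ag) (snd ag))" for i
  define \<alpha> where "\<alpha> i = fst (ag i)" for i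
  define g where "g i = snd (ag i)" for i
  have agp: "\<alpha> i \<in> A" "g i \<in> P" "p i = rep (\<alpha> i) (g i)" if "i < n" for i
    using someI_ex[OF ex[OF that]] unfolding \<alpha>_def g_def ag_def by blast+
  define k where "k = Suc (2 * n)"
  define ab where "ab x = (if x < n then i1 (\<alpha> x) else if x < 2 * n then g (x - n) else eps)" for x
  have ab_in: "ab x \<in> P" if "x < k" for x
    using that agp by (auto simp: ab_def k_def eps_in i1_in)
  define G where "G j = (\<lambda>x::nat\<Rightarrow>real. x j + x (2 * n) * x (n + j))" for j
  have Gs: "smooth_fun k (G j)" if "j < n" for j
    unfolding G_def using that by (intro smooth_add smooth_mult smooth_proj) (auto simp: k_def)
  have pr: "\<Theta> k (\<lambda>x. x i) ab = ab i" if "i < k" for i by (rule cr_proj[OF ringP that ab_in])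
  have step1: "\<Theta> k (G j) ab = p j" if j: "j < n" for j
  proof -
    have "\<Theta> k (G j) ab = \<Theta> 3 V3 (\<lambda>m. [\<Theta> k (\<lambda>x. x j) ab, \<Theta> k (\<lambda>x. x (2 * n)) ab, \<Theta> k (\<lambda>x. x (n + j)) ab] ! m)"
      unfolding G_def by (rule rep_comp[OF ringP]) (use j ab_in in \<open>auto intro!: smooth_proj simp: k_def\<close>)
    also have "\<dots> = \<Theta> 3 V3 (\<lambda>m. [ab j, ab (2 * n), ab (n + j)] ! m)"
    proof -
      have "\<Theta> k (\<lambda>x. x j) ab = ab j" by (rule pr) (use j in \<open>simp add: k_def\<close>)
      moreover have "\<Theta> k (\<lambda>x. x (2 * n)) ab = ab (2 * n)" by (rule pr) (simp add: k_def)
      moreover have "\<Theta> k (\<lambda>x. x (n + j)) ab = ab (n + j)" by (rule pr) (use j in \<open>simp add: k_def\<close>)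
      ultimately show ?thesis by (simp only:)
    qed
    also have "\<dots> = p j" using j agp by (simp add: ab_def rep_def)
    finally show ?thesis .
  qed
  have step2: "\<Theta> n f p = \<Theta> k (\<lambda>x. f (\<lambda>j. G j x)) ab"
  proof -
    have "\<Theta> n f p = \<Theta> n f (\<lambda>j. \<Theta> k (G j) ab)" by (rule cr_cong[OF ringP f]) (simp add: step1)
    also have "\<dots> = \<Theta> k (\<lambda>x. f (\<lambda>j. G j x)) ab" by (rule cr_comp[OF ringP f Gs ab_in, symmetric])
    finally show ?thesis .
  qed
  define Y where "Y i = (\<lambda>x::nat\<Rightarrow>real. if i < n then x i else if i < 2 * n then x (2 * n) * x i
      else if i < 3 * n then x (i - n) else x (2 * n))" for i
  define W2 where "W2 = (\<lambda>z. \<Sum>j<n. z (2 * n + j) * hadj n f j z)"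
  define Q2 where "Q2 = (\<lambda>z. f z + z (3 * n) * W2 z)"
  have dep: "depends_on_first n f" by (rule smooth_depends[OF f])
  have step3: "(\<lambda>x. f (\<lambda>j. G j x)) = (\<lambda>x. Q2 (\<lambda>i. Y i x))"
  proof
    fix x :: "nat \<Rightarrow> real"
    define z where "z = (\<lambda>i. Y i x)"
    have hd: "f (\<lambda>i. z i + z (n + i)) = f z + (\<Sum>j<n. z (n + j) * hadj n f j z)"
      by (rule hadamard[OF f])
    have "f (\<lambda>j. G j x) = f (\<lambda>i. z i + z (n + i))"
      using dep unfolding depends_on_first_def by (auto simp: G_def z_def Y_def)
    also have "\<dots> = f z + (\<Sum>j<n. z (n + j) * hadj n f j z)" by (rule hd)
    also have "(\<Sum>j<n. z (n + j) * hadj n f j z) = z (3 * n) * W2 z"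
      unfolding W2_def sum_distrib_left
      by (rule sum.cong) (auto simp: z_def Y_def)
    finally show "f (\<lambda>j. G j x) = Q2 (\<lambda>i. Y i x)" unfolding Q2_def z_def by simp
  qed
  have Ys: "smooth_fun k (Y i)" for i
  proof (cases "i < n")
    case True then show ?thesis unfolding Y_def by (simp add: k_def smooth_proj)
  next
    case c1: False show ?thesis
    proof (cases "i < 2 * n")
      case True then show ?thesis using c1 unfolding Y_def
        by (simp add: k_def smooth_proj smooth_mult)
    next
      case c2: False show ?thesis
      proof (cases "i < 3 * n")
        case True then show ?thesis using c1 c2 unfolding Y_def
          by (simp add: k_def smooth_proj)
      next
        case False then show ?thesis using c1 c2 unfolding Y_def by (simp add: k_def smooth_proj)
      qed
    qed
  qed
  have W2s: "smooth_fun (Suc (3 * n)) W2"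
    unfolding W2_def
    by (intro smooth_sum smooth_mult smooth_proj smooth_weaken[OF smooth_hadj[OF f]]) auto
  have Q2s: "smooth_fun (Suc (3 * n)) Q2"
    unfolding Q2_def by (intro smooth_add smooth_mult W2s smooth_proj smooth_weaken[OF f]) auto
  define d where "d i = \<Theta> k (Y i) ab" for i
  have d_in: "d i \<in> P" for i unfolding d_def by (rule cr_closed[OF ringP Ys ab_in])
  have step4: "\<Theta> k (\<lambda>x. Q2 (\<lambda>i. Y i x)) ab = \<Theta> (Suc (3 * n)) Q2 d"
    unfolding d_def by (rule cr_comp[OF ringP Q2s Ys ab_in])
  have fs: "smooth_fun (Suc (3 * n)) f" by (rule smooth_weaken[OF f]) auto
  have step5: "\<Theta> (Suc (3 * n)) Q2 d = \<Theta> 3 V3 (\<lambda>m. [\<Theta> (Suc (3 * n)) f d,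
      \<Theta> (Suc (3 * n)) (\<lambda>x. x (3 * n)) d, \<Theta> (Suc (3 * n)) W2 d] ! m)"
    unfolding Q2_def by (rule rep_comp[OF ringP fs smooth_proj W2s d_in]) auto
  have d3: "\<Theta> (Suc (3 * n)) (\<lambda>x. x (3 * n)) d = eps"
  proof -
    have "\<Theta> (Suc (3 * n)) (\<lambda>x. x (3 * n)) d = d (3 * n)" by (rule cr_proj[OF ringP _ d_in]) auto
    also have "\<dots> = \<Theta> k (\<lambda>x. x (2 * n)) ab" unfolding d_def Y_def by simp
    also have "\<dots> = ab (2 * n)" by (rule pr) (simp add: k_def)
    also have "\<dots> = eps" by (simp add: ab_def)
    finally show ?thesis .
  qed
  have dj: "d j = i1 (\<alpha> j)" if "j < n" for j
  proof -
    have "d j = \<Theta> k (\<lambda>x. x j) ab" unfolding d_def Y_def using that by simp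
    also have "\<dots> = ab j" by (rule pr) (use that in \<open>simp add: k_def\<close>)
    also have "\<dots> = i1 (\<alpha> j)" using that by (simp add: ab_def)
    finally show ?thesis .
  qed
  have df: "\<Theta> (Suc (3 * n)) f d = i1 (\<Phi> n f \<alpha>)"
  proof -
    have "\<Theta> (Suc (3 * n)) (\<lambda>x. f (\<lambda>j. x j)) d = \<Theta> n f (\<lambda>j. \<Theta> (Suc (3 * n)) (\<lambda>x. x j) d)"
      by (rule cr_comp[OF ringP f _ d_in]) (auto intro: smooth_proj)
    also have "\<dots> = \<Theta> n f (i1 \<circ> \<alpha>)"
      by (rule cr_cong[OF ringP f]) (simp add: cr_proj[OF ringP _ d_in] dj)
    also have "\<dots> = i1 (\<Phi> n f \<alpha>)" by (rule hom_op[OF hom1 f, symmetric]) (simp add: agp)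
    finally show ?thesis by simp
  qed
  have "\<Theta> n f p = rep (\<Phi> n f \<alpha>) (\<Theta> (Suc (3 * n)) W2 d)"
    using step2 step3 step4 step5 d3 df by (simp add: rep_def)
  moreover have "\<Phi> n f \<alpha> \<in> A" by (rule cr_closed[OF ringA f]) (simp add: agp)
  moreover have "\<Theta> (Suc (3 * n)) W2 d \<in> P" by (rule cr_closed[OF ringP W2s d_in])
  ultimately show "\<Theta> n f p \<in> Sset" unfolding Sset_def by blast
qed

end

lemma binop_ev:
  assumes X: "cinf_ring X \<Psi>" and B: "smooth_fun 2 (\<lambda>v. B (v 0) (v 1))"
    and F: "smooth_fun k F" and G: "smooth_fun k G" and t: "\<And>i. i < k \<Longrightarrow> t i \<in> X"
  shows "\<Psi> k (\<lambda>x. B (F x) (G x)) t = \<Psi> 2 (\<lambda>v. B (v 0) (v 1)) (\<lambda>i. if i = 0 then \<Psi> k F t else \<Psi> k G t)"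
proof -
  have sg: "\<And>j. j < 2 \<Longrightarrow> smooth_fun k (if j = 0 then F else G)" using F G by simp
  have "\<Psi> k (\<lambda>x. (\<lambda>v::nat\<Rightarrow>real. B (v 0) (v 1)) (\<lambda>j::nat. (if j = 0 then F else G) x)) t
      = \<Psi> 2 (\<lambda>v. B (v 0) (v 1)) (\<lambda>j. \<Psi> k (if j = 0 then F else G) t)"
    by (rule cr_comp[where g="\<lambda>j. if j = 0 then F else G" and m=2 and n=k and a=t, OF X B]) (use F G t in auto)
  then have "\<Psi> k (\<lambda>x. B (F x) (G x)) t = \<Psi> 2 (\<lambda>v. B (v 0) (v 1)) (\<lambda>j. \<Psi> k (if j = 0 then F else G) t)"
    by simp
  moreover have "(\<lambda>j::nat. \<Psi> k (if j = 0 then F else G) t) = (\<lambda>i. if i = 0 then \<Psi> k F t else \<Psi> k G t)"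
    by (simp add: fun_eq_iff)
  ultimately show ?thesis by simp
qed

lemma mul_ev:
  assumes X: "cinf_ring X \<Psi>" and F: "smooth_fun k F" and G: "smooth_fun k G" and t: "\<And>i. i < k \<Longrightarrow> t i \<in> X"
  shows "cinf_mul \<Psi> (\<Psi> k F t) (\<Psi> k G t) = \<Psi> k (\<lambda>x. F x * G x) t"
  unfolding cinf_mul_def using binop_ev[where B="\<lambda>a b::real. a * b", OF X smooth_V2 F G t] by simp

lemma z_idem:
  assumes X: "cinf_ring X \<Psi>" and r: "r * r = r"
  shows "cinf_mul \<Psi> (\<Psi> 0 (\<lambda>_. r) b) (\<Psi> 0 (\<lambda>_. r) b) = \<Psi> 0 (\<lambda>_. r) b"
  using mul_ev[OF X smooth_const smooth_const, of 0 b r r] r by simp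

lemma card2_eq:
  assumes "card S = 2" "x \<in> S" "y \<in> S" "x \<noteq> y"
  shows "S = {x, y}"
proof -
  have "finite S" using assms(1) by (metis card.infinite zero_neq_numeral)
  moreover have "{x, y} \<subseteq> S" using assms by auto
  moreover have "card {x, y} = card S" using assms by simp
  ultimately show ?thesis by (metis card_subset_eq)
qed

lemma partial_V2_zero0: "i < 2 \<Longrightarrow> partial i (\<lambda>v. v 0 * v 1) (\<lambda>_. 0) = 0"
  by (subst partial_mult[OF smooth_D[OF smooth_proj] smooth_D[OF smooth_proj]]) auto

lemma partial_V2_zero: "partial i (\<lambda>v. v 0 * v (Suc 0)) (\<lambda>_. 0) = 0"
proof (cases "i < 2")
  case True then show ?thesis using partial_V2_zero0 by simp
next
  case False
  then show ?thesis using partial_outside[OF smooth_depends[OF smooth_V2], of i] by simp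
qed

context cop_setup
begin

definition zP :: "real \<Rightarrow> 'p" where "zP r = \<Theta> 0 (\<lambda>_. r) (\<lambda>_. undefined)"

lemma zP_in: "zP r \<in> P" unfolding zP_def by (rule cr_closed[OF ringP smooth_const]) auto

lemma cst_P: "(\<And>i. i < k \<Longrightarrow> t i \<in> P) \<Longrightarrow> \<Theta> k (\<lambda>_. r) t = zP r"
  unfolding zP_def by (rule cst_ev[OF ringP])

lemma i1_cA: "i1 (cA r) = zP r"
proof -
  have "i1 (cA r) = \<Theta> 0 (\<lambda>_. r) (i1 \<circ> (\<lambda>_. undefined))"
    unfolding cA_def by (rule hom_op[OF hom1 smooth_const]) auto
  also have "\<dots> = zP r" unfolding zP_def by (rule cr_cong[OF ringP smooth_const]) auto
  finally show ?thesis .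
qed

lemma i1_in_S: assumes "\<alpha> \<in> A" shows "i1 \<alpha> \<in> Sset"
proof -
  define t where "t = (\<lambda>m. [i1 \<alpha>, eps] ! m)"
  have t: "t i \<in> P" if "i < 2" for i
    using that assms i1_in eps_in unfolding t_def by (auto simp: less_2_cases_iff)
  have "\<Theta> 2 (\<lambda>x. x 0 + x 1 * (\<lambda>_. 0) x) t = \<Theta> 3 V3 (\<lambda>m. [\<Theta> 2 (\<lambda>x. x 0) t, \<Theta> 2 (\<lambda>x. x 1) t, \<Theta> 2 (\<lambda>_. 0) t] ! m)"
    by (rule rep_comp[OF ringP smooth_proj smooth_proj smooth_const t]) auto
  also have "\<dots> = rep \<alpha> (zP 0)"
  proof -
    have p0: "\<Theta> 2 (\<lambda>x. x 0) t = i1 \<alpha>" using cr_proj[OF ringP _ t, of 0] by (simp add: t_def)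
    have p1: "\<Theta> 2 (\<lambda>x. x 1) t = eps" using cr_proj[OF ringP _ t, of 1] by (simp add: t_def)
    have c0: "\<Theta> 2 (\<lambda>_. 0) t = zP 0" by (rule cst_P[OF t])
    show ?thesis unfolding rep_def p0 p1 c0 ..
  qed
  finally have "rep \<alpha> (zP 0) = \<Theta> 2 (\<lambda>x. x 0) t" by simp
  also have "\<dots> = i1 \<alpha>" using cr_proj[OF ringP _ t, of 0 2] by (simp add: t_def)
  finally show ?thesis unfolding Sset_def using assms zP_in by (metis (mono_tags, lifting) mem_Collect_eq)
qed

lemma eps_in_S: "eps \<in> Sset"
proof -
  define t where "t = (\<lambda>m::nat. eps)"
  have t: "t i \<in> P" if "i < 1" for i using eps_in unfolding t_def by simp
  have "\<Theta> 1 (\<lambda>x. (\<lambda>_. 0) x + x 0 * (\<lambda>_. 1) x) t = \<Theta> 3 V3 (\<lambda>m. [\<Theta> 1 (\<lambda>_. 0) t, \<Theta> 1 (\<lambda>x. x 0) t, \<Theta> 1 (\<lambda>_. 1) t] ! m)"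
    by (rule rep_comp[OF ringP smooth_const smooth_proj smooth_const t]) auto
  also have "\<dots> = rep (cA 0) (zP 1)"
  proof -
    have p0: "\<Theta> 1 (\<lambda>x. x 0) t = eps" using cr_proj[OF ringP _ t, of 0] by (simp add: t_def)
    have c0: "\<Theta> 1 (\<lambda>_. 0) t = zP 0" by (rule cst_P[OF t])
    have c1: "\<Theta> 1 (\<lambda>_. 1) t = zP 1" by (rule cst_P[OF t])
    show ?thesis unfolding rep_def p0 c0 c1 i1_cA ..
  qed
  finally have "rep (cA 0) (zP 1) = \<Theta> 1 (\<lambda>x. x 0) t" by simp
  also have "\<dots> = eps" using cr_proj[OF ringP _ t, of 0 1] by (simp add: t_def)
  finally show ?thesis unfolding Sset_def using cA_in zP_in by (metis (mono_tags, lifting) mem_Collect_eq)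
qed

lemma P_eq_S: "P = Sset"
proof -
  have "range i2 \<subseteq> Sset"
  proof
    fix y assume "y \<in> range i2"
    then obtain r s where y: "y = i2 (r, s)" by auto
    have sm: "smooth_fun 1 (\<lambda>v. r + s * v 0)"
      by (intro smooth_add smooth_mult smooth_const smooth_proj) auto
    have "\<Theta> 1 (\<lambda>v. r + s * v 0) (\<lambda>_. eps) \<in> Sset"
      by (rule closedD[OF Sset_closed sm]) (use eps_in_S in auto)
    then show "y \<in> Sset" using y i2_eps by simp
  qed
  then have "Sset = P" using generation[OF Sset_closed Sset_sub] i1_in_S by blast
  then show ?thesis by simp
qed

lemma eps_sq: "cinf_mul \<Theta> eps eps = zP 0"
proof -
  have "cinf_mul \<Theta> eps eps = \<Theta> 2 (\<lambda>v. v 0 * v 1) (i2 \<circ> (\<lambda>i. (0, 1)))"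
    unfolding cinf_mul_def eps_def by (rule cr_cong[OF ringP smooth_V2]) simp
  also have "\<dots> = i2 (dual_cinf 2 (\<lambda>v. v 0 * v 1) (\<lambda>i. (0, 1)))"
    by (rule hom_op[OF hom2 smooth_V2, symmetric]) auto
  also have "dual_cinf 2 (\<lambda>v. v 0 * v 1) (\<lambda>i. (0, 1)) = (0, 0)"
    unfolding dual_cinf_def by (simp add: o_def partial_V2_zero)
  also have "(0::real, 0::real) = dual_cinf 0 (\<lambda>_. 0) (\<lambda>_. undefined)"
    by (simp add: dual_cinf_def)
  also have "i2 \<dots> = \<Theta> 0 (\<lambda>_. 0) (i2 \<circ> (\<lambda>_. undefined))"
    by (rule hom_op[OF hom2 smooth_const]) auto
  also have "\<dots> = zP 0" unfolding zP_def by (rule cr_cong[OF ringP smooth_const]) auto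
  finally show ?thesis .
qed

end

context cop_setup
begin

lemma idemA:
  assumes conn: "cinf_connected A \<Phi>" and hA: "cinf_hom A \<Phi> (UNIV :: real set) real_cinf h"
  shows "cinf_idempotents A \<Phi> = {cA 0, cA 1}"
proof -
  have hc: "h (cA r) = r" for r
  proof -
    have "h (cA r) = real_cinf 0 (\<lambda>_. r) (h \<circ> (\<lambda>_. undefined))"
      unfolding cA_def by (rule hom_op[OF hA smooth_const]) auto
    then show ?thesis by (simp add: real_cinf_def)
  qed
  have id: "cA r \<in> cinf_idempotents A \<Phi>" if "r * r = r" for r
    unfolding cinf_idempotents_def using cA_in z_idem[OF ringA that] unfolding cA_def by simp
  have "cA 0 \<noteq> cA 1" using hc[of 0] hc[of 1] by auto
  then show ?thesis using card2_eq[OF conn[unfolded cinf_connected_def] id id] by simp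
qed

lemma core:
  assumes e: "e \<in> P" "cinf_mul \<Theta> e e = e"
    and q: "cinf_hom P \<Theta> A \<Phi> q" "\<And>x. x \<in> A \<Longrightarrow> q (i1 x) = x" "\<And>r. q (i2 r) = cA (fst r)"
    and idA: "cinf_idempotents A \<Phi> = {cA 0, cA 1}"
  shows "e = zP 0 \<or> e = zP 1"
proof -
  obtain \<alpha> g where ag: "\<alpha> \<in> A" "g \<in> P" "e = rep \<alpha> g" using e(1) P_eq_S unfolding Sset_def by blast
  have qg: "q g \<in> A" using hom_in[OF q(1) ag(2)] .
  have qeps: "q eps = cA 0" unfolding eps_def using q(3) by simp
  have qe: "q e = \<alpha>"
  proof -
    have "q e = \<Phi> 3 V3 (q \<circ> (\<lambda>m. [i1 \<alpha>, eps, g] ! m))"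
      unfolding ag(3) rep_def
      by (rule hom_op[OF q(1) smooth_V3'], rule nth3_in) (use ag i1_in eps_in in auto)
    also have "\<dots> = \<Phi> 3 V3 (\<lambda>m. [\<alpha>, cA 0, q g] ! m)"
    proof (rule cr_cong[OF ringA smooth_V3'])
      fix m :: nat assume "m < 3"
      then have "m = 0 \<or> m = 1 \<or> m = 2" by arith
      then show "(q \<circ> (\<lambda>m. [i1 \<alpha>, eps, g] ! m)) m = [\<alpha>, cA 0, q g] ! m"
        using q(2)[OF ag(1)] qeps by auto
    qed
    also have "\<dots> = \<alpha>"
    proof -
      define t where "t = (\<lambda>m. [\<alpha>, q g] ! m)"
      have t: "t i \<in> A" if "i < 2" for i
        using that ag qg unfolding t_def by (auto simp: less_2_cases_iff)
      have "\<Phi> 2 (\<lambda>x. x 0 + (\<lambda>_. 0) x * x 1) t = \<Phi> 3 V3 (\<lambda>m. [\<Phi> 2 (\<lambda>x. x 0) t, \<Phi> 2 (\<lambda>_. 0) t, \<Phi> 2 (\<lambda>x. x 1) t] ! m)"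
        by (rule rep_comp[OF ringA smooth_proj smooth_const smooth_proj t]) auto
      moreover have "\<Phi> 2 (\<lambda>x. x 0) t = \<alpha>" using cr_proj[OF ringA _ t, of 0] by (simp add: t_def)
      moreover have "\<Phi> 2 (\<lambda>x. x 1) t = q g" using cr_proj[OF ringA _ t, of 1] by (simp add: t_def)
      moreover have "\<Phi> 2 (\<lambda>_. 0) t = cA 0" unfolding cA_def by (rule cst_ev[OF ringA t])
      ultimately show ?thesis by simp
    qed
    finally show ?thesis .
  qed
  have "cinf_mul \<Phi> (q e) (q e) = q (cinf_mul \<Theta> e e)"
    unfolding cinf_mul_def by (subst hom_op[OF q(1) smooth_V2]) (auto simp: e(1) o_def)
  then have "\<alpha> \<in> cinf_idempotents A \<Phi>" using e(2) qe ag(1) unfolding cinf_idempotents_def by simp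
  then obtain a :: real where a: "a = 0 \<or> a = 1" "\<alpha> = cA a" using idA by auto
  have aa: "a * a = a" using a(1) by auto
  define t where "t = (\<lambda>m. [eps, g] ! m)"
  have t: "t i \<in> P" if "i < 2" for i
    using that ag eps_in unfolding t_def by (auto simp: less_2_cases_iff)
  have t0: "\<Theta> 2 (\<lambda>x. x 0) t = eps" using cr_proj[OF ringP _ t, of 0] by (simp add: t_def)
  have t1: "\<Theta> 2 (\<lambda>x. x 1) t = g" using cr_proj[OF ringP _ t, of 1] by (simp add: t_def)
  have ct: "\<Theta> 2 (\<lambda>_. r) t = zP r" for r by (rule cst_P[OF t])
  define Fe where "Fe = (\<lambda>x::nat\<Rightarrow>real. a + x 0 * x 1)"
  have Fes: "smooth_fun 2 Fe" unfolding Fe_def by (intro smooth_add smooth_mult smooth_const smooth_proj) auto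
  have E_eq: "\<Theta> 2 Fe t = e"
  proof -
    have "\<Theta> 2 (\<lambda>x. (\<lambda>_. a) x + x 0 * x 1) t = \<Theta> 3 V3 (\<lambda>m. [\<Theta> 2 (\<lambda>_. a) t, \<Theta> 2 (\<lambda>x. x 0) t, \<Theta> 2 (\<lambda>x. x 1) t] ! m)"
      by (rule rep_comp[OF ringP smooth_const smooth_proj smooth_proj t]) auto
    also have "\<dots> = rep \<alpha> g" unfolding rep_def t0 t1 ct a(2) i1_cA ..
    finally show ?thesis unfolding Fe_def ag(3) by simp
  qed
  have EE: "\<Theta> 2 (\<lambda>x. Fe x * Fe x) t = e"
    using mul_ev[where t=t, OF ringP Fes Fes t] E_eq e(2) by simp
  have ee: "\<Theta> 2 (\<lambda>x. x 0 * x 0) t = zP 0"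
    using mul_ev[where t=t and k=2 and F="\<lambda>x. x 0" and G="\<lambda>x. x 0", OF ringP smooth_proj smooth_proj t] t0 eps_sq by simp
  define H where "H j = (if j = 0 then (\<lambda>x. Fe x * Fe x) else if j = 1 then Fe
      else if j = 2 then (\<lambda>x::nat\<Rightarrow>real. x 0 * x 0) else (\<lambda>x. x 1 * x 1))" for j :: nat
  define H' where "H' j = (if j = 0 then Fe else if j = 1 then Fe
      else if j = 2 then (\<lambda>x::nat\<Rightarrow>real. 0) else (\<lambda>x. x 1 * x 1))" for j :: nat
  define O4 where "O4 = (\<lambda>w::nat\<Rightarrow>real. (2 * a - 1) * (w 0 - w 1 - w 2 * w 3))"
  have O4s: "smooth_fun 4 O4" unfolding O4_def
    by (intro smooth_mult smooth_diff smooth_const smooth_proj) auto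
  have p2: "smooth_fun 2 (\<lambda>x::nat\<Rightarrow>real. x i * x i)" if "i < 2" for i
    using that by (intro smooth_mult smooth_proj)
  have Hs: "smooth_fun 2 (H j)" for j
    unfolding H_def using Fes p2[of 0] p2[of 1] by (auto intro: smooth_mult)
  have H's: "smooth_fun 2 (H' j)" for j
    unfolding H'_def using Fes p2[of 1] by (auto intro: smooth_const)
  have c1: "\<Theta> 2 (\<lambda>x. O4 (\<lambda>j. H j x)) t = \<Theta> 4 O4 (\<lambda>j. \<Theta> 2 (H j) t)"
    by (rule cr_comp[where g=H and a=t, OF ringP O4s Hs t])
  have c2: "(\<lambda>j. \<Theta> 2 (H j) t) = (\<lambda>j. \<Theta> 2 (H' j) t)"
  proof
    fix j show "\<Theta> 2 (H j) t = \<Theta> 2 (H' j) t"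
      unfolding H_def H'_def using EE E_eq ee ct[of 0] by auto
  qed
  have c3: "\<Theta> 2 (\<lambda>x. O4 (\<lambda>j. H' j x)) t = \<Theta> 4 O4 (\<lambda>j. \<Theta> 2 (H' j) t)"
    by (rule cr_comp[where g=H' and a=t, OF ringP O4s H's t])
  have c4: "(\<lambda>x. O4 (\<lambda>j. H' j x)) = (\<lambda>_. 0)"
    unfolding O4_def H'_def by simp
  have c5: "(\<lambda>x. O4 (\<lambda>j. H j x)) = (\<lambda>x. x 0 * x 1)"
  proof
    fix x :: "nat \<Rightarrow> real"
    show "O4 (\<lambda>j. H j x) = x 0 * x 1"
      using a(1) unfolding O4_def H_def Fe_def by (auto simp: algebra_simps)
  qed
  have y0: "\<Theta> 2 (\<lambda>x. x 0 * x 1) t = zP 0"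
    using c1 c2 c3 c4 c5 ct[of 0] by simp
  have "\<Theta> 2 (\<lambda>x. (\<lambda>_. a) x + x 0 * x 1) t
      = \<Theta> 2 (\<lambda>v. v 0 + v 1) (\<lambda>i. if i = 0 then \<Theta> 2 (\<lambda>_. a) t else \<Theta> 2 (\<lambda>x. x 0 * x 1) t)"
    by (rule binop_ev[where B="\<lambda>u v. u + v" and t=t, OF ringP smooth_A2 smooth_const smooth_V2 t])
  also have "\<dots> = \<Theta> 2 (\<lambda>v. v 0 + v 1) (\<lambda>i. if i = 0 then \<Theta> 2 (\<lambda>_. a) t else \<Theta> 2 (\<lambda>_. 0) t)"
    by (simp only: y0 ct)
  also have "\<dots> = \<Theta> 2 (\<lambda>x. (\<lambda>_. a) x + (\<lambda>_. 0) x) t"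
    by (rule binop_ev[where B="\<lambda>u v. u + v" and t=t, OF ringP smooth_A2 smooth_const smooth_const t, symmetric])
  also have "\<dots> = zP a" using ct[of a] by simp
  finally have "e = zP a" using E_eq unfolding Fe_def by simp
  then show ?thesis using a(1) by auto
qed

end

theorem lemma4p2:
  fixes A :: "'a set" and \<Phi> :: "'a cinf_ops"
    and P :: "'p set" and \<Theta> :: "'p cinf_ops"
    and i1 :: "'a \<Rightarrow> 'p" and i2 :: "real \<times> real \<Rightarrow> 'p"
  assumes "cinf_ring A \<Phi>" and "cinf_fg A \<Phi>"
    and "cinf_connected A \<Phi>" and "cinf_has_point A \<Phi>"
    and "is_cinf_coproduct A \<Phi> (UNIV :: (real \<times> real) set) dual_cinf P \<Theta> i1 i2"
  shows "cinf_connected P \<Theta> \<and> cinf_has_point P \<Theta>"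
proof -
  interpret cop_setup A \<Phi> P \<Theta> i1 i2
    using assms(1,2,5) by unfold_locales
  obtain h where hA: "cinf_hom A \<Phi> (UNIV :: real set) real_cinf h"
    using assms(4) unfolding cinf_has_point_def by blast
  obtain q where q: "cinf_hom P \<Theta> A \<Phi> q" "\<And>x. x \<in> A \<Longrightarrow> q (i1 x) = x" "\<And>r. q (i2 r) = cA (fst r)"
    using exists_q by blast
  have hq: "cinf_hom P \<Theta> (UNIV :: real set) real_cinf (h \<circ> q)" by (rule hom_comp[OF q(1) hA])
  have idA: "cinf_idempotents A \<Phi> = {cA 0, cA 1}" by (rule idemA[OF assms(3) hA])
  have hz: "(h \<circ> q) (zP r) = r" for r
  proof -
    have "(h \<circ> q) (zP r) = real_cinf 0 (\<lambda>_. r) ((h \<circ> q) \<circ> (\<lambda>_. undefined))"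
      unfolding zP_def by (rule hom_op[OF hq smooth_const]) auto
    then show ?thesis by (simp add: real_cinf_def)
  qed
  have zid: "zP r \<in> cinf_idempotents P \<Theta>" if "r * r = r" for r
    unfolding cinf_idempotents_def using zP_in z_idem[OF ringP that] unfolding zP_def by simp
  have "cinf_idempotents P \<Theta> = {zP 0, zP 1}"
  proof
    show "cinf_idempotents P \<Theta> \<subseteq> {zP 0, zP 1}"
    proof
      fix e assume "e \<in> cinf_idempotents P \<Theta>"
      then have "e \<in> P" "cinf_mul \<Theta> e e = e" unfolding cinf_idempotents_def by auto
      then show "e \<in> {zP 0, zP 1}" using core[OF _ _ q idA] by blast
    qed
    show "{zP 0, zP 1} \<subseteq> cinf_idempotents P \<Theta>" using zid[of 0] zid[of 1] by simp
  qed
  moreover have "zP 0 \<noteq> zP 1" using hz[of 0] hz[of 1] by auto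
  ultimately have "cinf_connected P \<Theta>" unfolding cinf_connected_def by simp
  moreover have "cinf_has_point P \<Theta>" unfolding cinf_has_point_def using hq by blast
  ultimately show ?thesis by blast
qed

end
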